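(* Suppose (A1) and (A2) hold, and fix $\tau>0$. (a) For all $x,y\in X$: $\lim_{r\downarrow1}(r-1)\int_0^{2\pi}\|R(re^{i\theta},T(\tau))x\|^2d\theta=0$ and $\lim_{r\downarrow1}(r-1)\int_0^{2\pi}\|R(re^{i\theta},T(\tau)^* )y\|^2d\theta=0$. (b) Let $0<\delta\le\alpha/2$. For all $x\in\mathcal D^\delta$ and $y\in\mathcal D^\delta_*$: $\lim_{r\downarrow1}\Lambda_{\delta/\alpha}(r)\int_0^{2\pi}\|R(re^{i\theta},T(\tau))x\|^2d\theta=0$ and $\lim_{r\downarrow1}\Lambda_{\delta/\alpha}(r)\int_0^{2\pi}\|R(re^{i\theta},T(\tau)^* )y\|^2d\theta=0$.
   Context: $X$ is a complex Hilbert space; $A$ is a Riesz-spectral operator (simple distinct eigenvalues $(\lambda_n)$ with finitely many accumulation points, Riesz basis of eigenvectors $(\phi_n)$, biorthogonal eigenvectors $(\psi_n)$ of $A^*$), generating $T(t)x=\sum_ne^{t\lambda_n}\langle x,\psi_n\rangle\phi_n$. $\mathcal D^{\delta}=\{x:\sum_n|\lambda_n|^{2\delta}|\langle x,\psi_n\rangle|^2<\infty\}$, $\mathcal D^{\delta}_*=\{x:\sum_n|\lambda_n|^{2\delta}|\langle x,\phi_n\rangle|^2<\infty\}$. (A1): there exist $\omega,\alpha,\Upsilon>0$ such that only finitely many $\lambda_n$ lie in $\{\mathrm{Re}\,\lambda>-\omega\}\cap(\mathbb C\setminus\Omega_{\alpha,\Upsilon})$, where $\Omega_{\alpha,\Upsilon}=\{\lambda\in\mathbb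 C\setminus\mathbb R:\mathrm{Re}\,\lambda\le-\Upsilon/|\mathrm{Im}\,\lambda|^\alpha\}$; (A2): no $\lambda_n$ lies on $i\mathbb R$. For $0<s\le1/2$ and $r>1$: $\Lambda_s(r)=(r-1)^{1-2s}$ if $s<1/2$ and $\Lambda_{1/2}(r)=|\log(r-1)|^{-1}$. (Under (A1),(A2), $re^{i\theta}\in\rho(T(\tau))$ for $r>1$ close to 1.) *)

theory Defs
  imports "HOL-Analysis.Analysis"
begin

text \<open>HOL-Analysis only provides real inner product
spaces, so we introduce a type class: a real Banach space carrying a compatible
complex scalar multiplication and a complex inner product (linear in the first
argument, conjugate symmetric) inducing the norm.\<close>

class chilbert = real_normed_vector + complete_space +
  fixes scaleC :: "complex \<Rightarrow> 'a \<Rightarrow> 'a"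
    and cinner :: "'a \<Rightarrow> 'a \<Rightarrow> complex"
  assumes scaleC_add_right: "scaleC a (x + y) = scaleC a x + scaleC a y"
    and scaleC_add_left: "scaleC (a + b) x = scaleC a x + scaleC b x"
    and scaleC_scaleC: "scaleC a (scaleC b x) = scaleC (a * b) x"
    and scaleC_one: "scaleC 1 x = x"
    and scaleR_scaleC: "scaleR r x = scaleC (complex_of_real r) x"
    and cinner_commute: "cinner x y = cnj (cinner y x)"
    and cinner_add_left: "cinner (x + y) z = cinner x z + cinner y z"
    and cinner_scaleC_left: "cinner (scaleC a x) y = a * cinner x y"
    and cinner_self: "cinner x x = complex_of_real ((norm x)\<^sup>2)"

definition riesz_basis :: "(nat \<Rightarrow> 'a::chilbert) \<Rightarrow> bool" where
  "riesz_basis \<phi> \<longleftrightarrow>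
     closure {(\<Sum>n\<in>F. scaleC (c n) (\<phi> n)) | F c. finite F} = UNIV \<and>
     (\<exists>m M. 0 < m \<and> 0 < M \<and>
        (\<forall>N (c :: nat \<Rightarrow> complex).
           m * (\<Sum>n<N. (cmod (c n))\<^sup>2) \<le> (norm (\<Sum>n<N. scaleC (c n) (\<phi> n)))\<^sup>2 \<and>
           (norm (\<Sum>n<N. scaleC (c n) (\<phi> n)))\<^sup>2 \<le> M * (\<Sum>n<N. (cmod (c n))\<^sup>2)))"

definition biorthogonal :: "(nat \<Rightarrow> 'a::chilbert) \<Rightarrow> (nat \<Rightarrow> 'a) \<Rightarrow> bool" where
  "biorthogonal \<phi> \<psi> \<longleftrightarrow> (\<forall>n k. cinner (\<phi> n) (\<psi> k) = (if n = k then 1 else 0))"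

text \<open>Spectral data of a Riesz-spectral operator A: simple distinct eigenvalues
with finitely many accumulation points, a Riesz basis of eigenvectors \<phi>, and the
biorthogonal sequence \<psi> (eigenvectors of A^*).  A is
A x = \<Sum> \<lambda>_n \<langle>x,\<psi>_n\<rangle> \<phi>_n.\<close>

definition riesz_spectral :: "(nat \<Rightarrow> complex) \<Rightarrow> (nat \<Rightarrow> 'a::chilbert) \<Rightarrow> (nat \<Rightarrow> 'a) \<Rightarrow> bool" where
  "riesz_spectral lam \<phi> \<psi> \<longleftrightarrow>
     inj lam \<and> finite {z. z islimpt range lam} \<and> riesz_basis \<phi> \<and> biorthogonal \<phi> \<psi>"

definition rs_semigroup :: "(nat \<Rightarrow> complex) \<Rightarrow> (nat \<Rightarrow> 'a::chilbert) \<Rightarrow> (nat \<Rightarrow> 'a) \<Rightarrow> real \<Rightarrow> 'a \<Rightarrow> 'a" where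
  "rs_semigroup lam \<phi> \<psi> t x = (\<Sum>n. scaleC (exp (complex_of_real t * lam n) * cinner x (\<psi> n)) (\<phi> n))"

definition hadjoint :: "('a::chilbert \<Rightarrow> 'a) \<Rightarrow> 'a \<Rightarrow> 'a" where
  "hadjoint S y = (THE z. \<forall>x. cinner (S x) y = cinner x z)"

definition resolvent :: "complex \<Rightarrow> ('a::chilbert \<Rightarrow> 'a) \<Rightarrow> 'a \<Rightarrow> 'a" where
  "resolvent \<mu> S x = (THE y. scaleC \<mu> y - S y = x)"

definition Dom_pow :: "real \<Rightarrow> (nat \<Rightarrow> complex) \<Rightarrow> (nat \<Rightarrow> 'a::chilbert) \<Rightarrow> 'a set" where
  "Dom_pow \<delta> lam \<psi> = {x. summable (\<lambda>n. cmod (lam n) powr (2 * \<delta>) * (cmod (cinner x (\<psi> n)))\<^sup>2)}"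

definition Omega :: "real \<Rightarrow> real \<Rightarrow> complex set" where
  "Omega \<alpha> \<Upsilon> = {z. Im z \<noteq> 0 \<and> Re z \<le> - \<Upsilon> / (\<bar>Im z\<bar> powr \<alpha>)}"

definition Lambda :: "real \<Rightarrow> real \<Rightarrow> real" where
  "Lambda s r = (if s < 1/2 then (r - 1) powr (1 - 2 * s) else 1 / \<bar>ln (r - 1)\<bar>)"

end

theory Submission
  imports Defs "HOL-Complex_Analysis.Complex_Analysis"
begin

lemma cinner_scaleC_right: "cinner x (scaleC a y) = cnj a * cinner x y"
  by (metis cinner_commute cinner_scaleC_left complex_cnj_cnj complex_cnj_mult)

lemma cinner_add_right: "cinner x (y + z) = cinner x y + cinner x z"
  by (metis cinner_commute cinner_add_left complex_cnj_add)

lemma cinner_zero_left[simp]: "cinner 0 y = 0"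
  using cinner_add_left[of 0 0 y] by simp

lemma cinner_zero_right[simp]: "cinner x 0 = 0"
  using cinner_add_right[of x 0 0] by simp

lemma cinner_minus_left: "cinner (- x) y = - cinner x y"
  proof -
  have "cinner x y + cinner (-x) y = 0" using cinner_add_left[of x "-x" y] by simp
  thus ?thesis by (metis minus_unique)
qed

lemma cinner_minus_right: "cinner x (- y) = - cinner x y"
  proof -
  have "cinner x y + cinner x (-y) = 0" using cinner_add_right[of x y "-y"] by simp
  thus ?thesis by (metis minus_unique)
qed

lemma cinner_diff_left: "cinner (x - y) z = cinner x z - cinner y z"
  using cinner_add_left[of x "-y" z] cinner_minus_left by simp

lemma cinner_diff_right: "cinner x (y - z) = cinner x y - cinner x z"
  using cinner_add_right[of x y "-z"] cinner_minus_right by simp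

lemma cinner_scaleR_left: "cinner (scaleR r x) y = of_real r * cinner x y"
  by (simp add: scaleR_scaleC cinner_scaleC_left)

lemma cinner_sum_left: "cinner (\<Sum>i\<in>F. f i) y = (\<Sum>i\<in>F. cinner (f i) y)"
  by (induct F rule: infinite_finite_induct) (auto simp: cinner_add_left)

lemma cinner_sum_right: "cinner y (\<Sum>i\<in>F. f i) = (\<Sum>i\<in>F. cinner y (f i))"
  by (induct F rule: infinite_finite_induct) (auto simp: cinner_add_right)

lemma scaleC_zero_right[simp]: "scaleC a 0 = 0"
  using scaleC_add_right[of a 0 0] by simp

lemma scaleC_zero_left[simp]: "scaleC 0 x = 0"
  using scaleC_add_left[of 0 0 x] by simp

lemma scaleC_minus_right: "scaleC a (- x) = - scaleC a x"
  using scaleC_add_right[of a x "-x"] by (simp add: minus_unique)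

lemma scaleC_diff_right: "scaleC a (x - y) = scaleC a x - scaleC a y"
  using scaleC_add_right[of a x "-y"] scaleC_minus_right by simp

lemma scaleC_minus_left: "scaleC (- a) x = - scaleC a x"
  using scaleC_add_left[of a "-a" x] by (simp add: minus_unique)

lemma scaleC_diff_left: "scaleC (a - b) x = scaleC a x - scaleC b x"
  using scaleC_add_left[of a "-b" x] scaleC_minus_left by simp

lemma scaleC_sum_right: "scaleC a (\<Sum>i\<in>F. f i) = (\<Sum>i\<in>F. scaleC a (f i))"
  by (induct F rule: infinite_finite_induct) (auto simp: scaleC_add_right)

lemma scaleC_scaleR_comm: "scaleC a (scaleR r x) = scaleR r (scaleC a x)"
  by (simp add: scaleR_scaleC scaleC_scaleC mult.commute)

lemma cinner_self_re: "Re (cinner x x) = (norm x)\<^sup>2"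
  by (simp add: cinner_self)

lemma norm_scaleC: "norm (scaleC a x) = cmod a * norm x"
proof -
  have "complex_of_real ((norm (scaleC a x))\<^sup>2) = cinner (scaleC a x) (scaleC a x)"
    by (rule cinner_self[symmetric])
  also have "\<dots> = (a * cnj a) * cinner x x"
    by (simp add: cinner_scaleC_left cinner_scaleC_right)
  also have "\<dots> = complex_of_real ((cmod a)\<^sup>2 * (norm x)\<^sup>2)"
    by (simp only: cinner_self complex_norm_square[symmetric] of_real_mult)
  finally have "(norm (scaleC a x))\<^sup>2 = (cmod a * norm x)\<^sup>2"
    by (simp only: of_real_eq_iff power_mult_distrib)
  thus ?thesis by (simp add: power2_eq_iff_nonneg)
qed

lemma cinner_eq_zeroI: "(\<And>x. cinner x z = 0) \<Longrightarrow> z = 0"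
  using cinner_self[of z] by simp

lemma Cauchy_Schwarz: "cmod (cinner x y) \<le> norm x * norm y"
proof (cases "y = 0")
  case True thus ?thesis by simp
next
  case False
  hence ny: "norm y > 0" by simp
  define N where "N = complex_of_real ((norm y)\<^sup>2)"
  have N0: "N \<noteq> 0" using ny by (simp add: N_def)
  have cN: "cnj N = N" by (simp add: N_def)
  have yy: "cinner y y = N" unfolding N_def by (rule cinner_self)
  have yx: "cinner y x = cnj (cinner x y)" by (rule cinner_commute)
  define t where "t = cinner x y / N"
  have "cinner (x - scaleC t y) (x - scaleC t y)
        = cinner x x - cnj t * cinner x y - t * cinner y x + t * cnj t * cinner y y"
    by (simp add: cinner_diff_left cinner_diff_right cinner_scaleC_left cinner_scaleC_right
        algebra_simps)
  also have "\<dots> = cinner x x - cinner x y * cnj (cinner x y) / N"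
    unfolding yy yx t_def using N0 cN by (simp add: field_simps)
  also have "\<dots> = complex_of_real ((norm x)\<^sup>2 - (cmod (cinner x y))\<^sup>2 / (norm y)\<^sup>2)"
    unfolding N_def by (simp only: cinner_self complex_norm_square[symmetric] of_real_diff of_real_divide)
  finally have "complex_of_real ((norm (x - scaleC t y))\<^sup>2)
        = complex_of_real ((norm x)\<^sup>2 - (cmod (cinner x y))\<^sup>2 / (norm y)\<^sup>2)"
    by (simp only: cinner_self)
  hence "(norm (x - scaleC t y))\<^sup>2 = (norm x)\<^sup>2 - (cmod (cinner x y))\<^sup>2 / (norm y)\<^sup>2"
    by (simp only: of_real_eq_iff)
  hence "0 \<le> (norm x)\<^sup>2 - (cmod (cinner x y))\<^sup>2 / (norm y)\<^sup>2"
    by (metis zero_le_power2)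
  hence "(cmod (cinner x y))\<^sup>2 \<le> (norm x * norm y)\<^sup>2"
    using ny by (simp add: field_simps power_mult_distrib)
  thus ?thesis by (meson abs_le_square_iff abs_norm_cancel norm_ge_zero mult_nonneg_nonneg
        power2_le_imp_le)
qed

lemma bounded_linear_cinner_left: "bounded_linear (\<lambda>x. cinner x y)"
proof (rule bounded_linear_intro[where K="norm y"])
  show "cinner (a + b) y = cinner a y + cinner b y" for a b by (rule cinner_add_left)
  show "cinner (scaleR r a) y = scaleR r (cinner a y)" for r a
    by (simp add: cinner_scaleR_left scaleR_conv_of_real)
  show "norm (cinner x y) \<le> norm x * norm y" for x
  proof -
    have "cmod (cinner x y) \<le> norm x * norm y" by (rule Cauchy_Schwarz)
    thus ?thesis by simp
  qed
qed

lemma bounded_linear_cinner_right: "bounded_linear (\<lambda>x. cinner y x)"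
proof (rule bounded_linear_intro[where K="norm y"])
  show "cinner y (a + b) = cinner y a + cinner y b" for a b by (rule cinner_add_right)
  show "cinner y (scaleR r a) = scaleR r (cinner y a)" for r a
    by (simp add: scaleR_scaleC cinner_scaleC_right scaleR_conv_of_real)
  show "norm (cinner y x) \<le> norm x * norm y" for x
    using Cauchy_Schwarz[of y x] by (simp add: mult.commute)
qed

lemma bounded_linear_scaleC: "bounded_linear (\<lambda>x. scaleC a x)"
  by (rule bounded_linear_intro[where K="cmod a"])
     (auto simp: scaleC_add_right scaleC_scaleR_comm norm_scaleC)

lemma bounded_linear_scaleC_left: "bounded_linear (\<lambda>a. scaleC a x)"
  by (rule bounded_linear_intro[where K="norm x"])
     (auto simp: scaleC_add_left scaleR_scaleC scaleC_scaleC norm_scaleC scaleR_conv_of_real)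

lemma cinner_suminf_left: "summable f \<Longrightarrow> cinner (suminf f) y = (\<Sum>n. cinner (f n) y)"
  using bounded_linear.suminf[OF bounded_linear_cinner_left] by metis

lemma cinner_suminf_right: "summable f \<Longrightarrow> cinner y (suminf f) = (\<Sum>n. cinner y (f n))"
  using bounded_linear.suminf[OF bounded_linear_cinner_right] by metis

lemma continuous_cinner_left: "continuous_on UNIV (\<lambda>x. cinner x y)"
  using bounded_linear_cinner_left linear_continuous_on by blast

context chilbert begin
subclass banach ..
end

lemma continuous_on_cinner_left[continuous_intros]:
  "continuous_on S f \<Longrightarrow> continuous_on S (\<lambda>x. cinner (f x) y)"
  using bounded_linear.continuous_on[OF bounded_linear_cinner_left] by blast

definition rsys :: "(nat \<Rightarrow> 'a::chilbert) \<Rightarrow> (nat \<Rightarrow> 'a) \<Rightarrow> real \<Rightarrow> real \<Rightarrow> bool" where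
  "rsys \<phi> \<psi> m M \<longleftrightarrow> 0 < m \<and> 0 < M \<and>
     (\<forall>n k. cinner (\<phi> n) (\<psi> k) = (if n = k then 1 else 0)) \<and>
     (\<forall>x. summable (\<lambda>n. (cmod (cinner x (\<psi> n)))\<^sup>2) \<and>
          m * (\<Sum>n. (cmod (cinner x (\<psi> n)))\<^sup>2) \<le> (norm x)\<^sup>2) \<and>
     (\<forall>c a b. (norm (\<Sum>n\<in>{a..<b}. scaleC (c n) (\<phi> n)))\<^sup>2 \<le> M * (\<Sum>n\<in>{a..<b}. (cmod (c n))\<^sup>2)) \<and>
     (\<forall>x. (\<lambda>n. scaleC (cinner x (\<psi> n)) (\<phi> n)) sums x)"

lemma synth:
  fixes \<phi> :: "nat \<Rightarrow> 'a::chilbert"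
  assumes blk: "\<And>c a b. (norm (\<Sum>n\<in>{a..<b}. scaleC (c n) (\<phi> n)))\<^sup>2 \<le> M * (\<Sum>n\<in>{a..<b}. (cmod (c n))\<^sup>2)"
    and M: "0 < M"
    and d: "summable (\<lambda>n. (cmod (d n))\<^sup>2)"
  shows "summable (\<lambda>n. scaleC (d n) (\<phi> n))"
    and "(norm (\<Sum>n. scaleC (d n) (\<phi> n)))\<^sup>2 \<le> M * (\<Sum>n. (cmod (d n))\<^sup>2)"
proof -
  show sm: "summable (\<lambda>n. scaleC (d n) (\<phi> n))"
    unfolding summable_Cauchy
  proof (intro allI impI)
    fix e :: real assume e: "e > 0"
    from d[unfolded summable_Cauchy, rule_format, of "e\<^sup>2 / M"] e M
    obtain N where N: "\<And>m n. m \<ge> N \<Longrightarrow> norm (\<Sum>k\<in>{m..<n}. (cmod (d k))\<^sup>2) < e\<^sup>2 / M"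
      by auto
    show "\<exists>N. \<forall>m\<ge>N. \<forall>n. norm (\<Sum>k\<in>{m..<n}. scaleC (d k) (\<phi> k)) < e"
    proof (intro exI allI impI)
      fix m n assume "m \<ge> N"
      hence "(\<Sum>k\<in>{m..<n}. (cmod (d k))\<^sup>2) < e\<^sup>2 / M"
        using N[of m n] by (simp add: sum_nonneg)
      hence "M * (\<Sum>k\<in>{m..<n}. (cmod (d k))\<^sup>2) < e\<^sup>2"
        using M by (simp add: pos_less_divide_eq mult.commute)
      hence "(norm (\<Sum>k\<in>{m..<n}. scaleC (d k) (\<phi> k)))\<^sup>2 < e\<^sup>2"
        using blk[of d m n] by linarith
      thus "norm (\<Sum>k\<in>{m..<n}. scaleC (d k) (\<phi> k)) < e"
        by (rule power2_less_imp_less) (use e in auto)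
    qed
  qed
  have lim: "(\<lambda>N. (norm (\<Sum>n<N. scaleC (d n) (\<phi> n)))\<^sup>2) \<longlonglongrightarrow> (norm (\<Sum>n. scaleC (d n) (\<phi> n)))\<^sup>2"
    by (intro tendsto_intros summable_LIMSEQ sm)
  show "(norm (\<Sum>n. scaleC (d n) (\<phi> n)))\<^sup>2 \<le> M * (\<Sum>n. (cmod (d n))\<^sup>2)"
  proof (rule LIMSEQ_le_const2[OF lim], rule exI[of _ 0], intro allI impI)
    fix N :: nat
    have "(norm (\<Sum>n<N. scaleC (d n) (\<phi> n)))\<^sup>2 \<le> M * (\<Sum>n<N. (cmod (d n))\<^sup>2)"
      using blk[of d 0 N] by (simp add: atLeast0LessThan)
    also have "\<dots> \<le> M * (\<Sum>n. (cmod (d n))\<^sup>2)"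
      using M d by (intro mult_left_mono sum_le_suminf) auto
    finally show "(norm (\<Sum>n<N. scaleC (d n) (\<phi> n)))\<^sup>2 \<le> M * (\<Sum>n. (cmod (d n))\<^sup>2)" .
  qed
qed

lemma coeff_of_synth:
  fixes \<phi> \<psi> :: "nat \<Rightarrow> 'a::chilbert"
  assumes bio: "\<And>n k. cinner (\<phi> n) (\<psi> k) = (if n = k then 1 else 0)"
    and sm: "summable (\<lambda>n. scaleC (d n) (\<phi> n))"
  shows "cinner (\<Sum>k. scaleC (d k) (\<phi> k)) (\<psi> n) = d n"
proof -
  have "cinner (\<Sum>k. scaleC (d k) (\<phi> k)) (\<psi> n) = (\<Sum>k. cinner (scaleC (d k) (\<phi> k)) (\<psi> n))"
    by (rule cinner_suminf_left[OF sm])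
  also have "\<dots> = (\<Sum>k. if k = n then d k else 0)"
    by (intro arg_cong[where f=suminf] ext) (simp add: cinner_scaleC_left bio)
  also have "\<dots> = d n" using sums_single[of n d] sums_unique by metis
  finally show ?thesis .
qed

lemma rsysD:
  assumes "rsys \<phi> \<psi> m M"
  shows "0 < m" "0 < M" "\<And>n k. cinner (\<phi> n) (\<psi> k) = (if n = k then 1 else 0)"
    "\<And>x. summable (\<lambda>n. (cmod (cinner x (\<psi> n)))\<^sup>2)"
    "\<And>x. m * (\<Sum>n. (cmod (cinner x (\<psi> n)))\<^sup>2) \<le> (norm x)\<^sup>2"
    "\<And>c a b. (norm (\<Sum>n\<in>{a..<b}. scaleC (c n) (\<phi> n)))\<^sup>2 \<le> M * (\<Sum>n\<in>{a..<b}. (cmod (c n))\<^sup>2)"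
    "\<And>x. (\<lambda>n. scaleC (cinner x (\<psi> n)) (\<phi> n)) sums x"
  using assms unfolding rsys_def by auto

lemma rsys_ext:
  assumes "rsys \<phi> \<psi> m M" and "\<And>n. cinner u (\<psi> n) = cinner v (\<psi> n)"
  shows "u = v"
  using rsysD(7)[OF assms(1), of u] rsysD(7)[OF assms(1), of v] assms(2)
  by (simp add: sums_iff)

lemma rsys_synth:
  assumes R: "rsys \<phi> \<psi> m M" and d: "summable (\<lambda>n. (cmod (d n))\<^sup>2)"
  shows "summable (\<lambda>n. scaleC (d n) (\<phi> n))"
    "(norm (\<Sum>n. scaleC (d n) (\<phi> n)))\<^sup>2 \<le> M * (\<Sum>n. (cmod (d n))\<^sup>2)"
    "\<And>k. cinner (\<Sum>n. scaleC (d n) (\<phi> n)) (\<psi> k) = d k"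
  using synth[OF rsysD(6)[OF R] rsysD(2)[OF R] d] coeff_of_synth[OF rsysD(3)[OF R]] by auto

section \<open>From a Riesz basis to rsys\<close>

lemma sum_shift_block:
  fixes f :: "nat \<Rightarrow> 'b::comm_monoid_add"
  shows "(\<Sum>n<b. if a \<le> n then f n else 0) = (\<Sum>n\<in>{a..<b}. f n)"
proof -
  have "(\<Sum>n<b. if a \<le> n then f n else 0) = (\<Sum>n\<in>{..<b} \<inter> {n. a \<le> n}. f n)"
    by (simp add: sum.inter_restrict)
  also have "{..<b} \<inter> {n. a \<le> n} = {a..<b}" by auto
  finally show ?thesis .
qed

lemma riesz_rsys:
  fixes \<phi> \<psi> :: "nat \<Rightarrow> 'a::chilbert"
  assumes rb: "riesz_basis \<phi>" and bo: "biorthogonal \<phi> \<psi>"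
  shows "\<exists>m M. rsys \<phi> \<psi> m M"
proof -
  have dense: "closure {(\<Sum>n\<in>F. scaleC (c n) (\<phi> n)) | F c. finite F} = UNIV"
    using rb unfolding riesz_basis_def by blast
  define V where "V = {(\<Sum>n\<in>F. scaleC (c n) (\<phi> n)) | F c. finite F}"
  obtain m M where m: "0 < m" and M: "0 < M" and fr:
    "\<And>N (c :: nat \<Rightarrow> complex). m * (\<Sum>n<N. (cmod (c n))\<^sup>2) \<le> (norm (\<Sum>n<N. scaleC (c n) (\<phi> n)))\<^sup>2 \<and>
        (norm (\<Sum>n<N. scaleC (c n) (\<phi> n)))\<^sup>2 \<le> M * (\<Sum>n<N. (cmod (c n))\<^sup>2)"
    using rb unfolding riesz_basis_def by blast
  have bio: "\<And>n k. cinner (\<phi> n) (\<psi> k) = (if n = k then 1 else 0)"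
    using bo unfolding biorthogonal_def by blast
  have blk: "(norm (\<Sum>n\<in>{a..<b}. scaleC (c n) (\<phi> n)))\<^sup>2 \<le> M * (\<Sum>n\<in>{a..<b}. (cmod (c n))\<^sup>2)"
    for c a b
  proof -
    define c' where "c' = (\<lambda>n. if a \<le> n then c n else 0)"
    have e1: "(\<Sum>n<b. scaleC (c' n) (\<phi> n)) = (\<Sum>n\<in>{a..<b}. scaleC (c n) (\<phi> n))"
    proof -
      have "(\<Sum>n<b. scaleC (c' n) (\<phi> n)) = (\<Sum>n<b. if a \<le> n then scaleC (c n) (\<phi> n) else 0)"
        by (rule sum.cong) (auto simp: c'_def)
      also have "\<dots> = (\<Sum>n\<in>{a..<b}. scaleC (c n) (\<phi> n))" by (rule sum_shift_block)
      finally show ?thesis .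
    qed
    have e2: "(\<Sum>n<b. (cmod (c' n))\<^sup>2) = (\<Sum>n\<in>{a..<b}. (cmod (c n))\<^sup>2)"
    proof -
      have "(\<Sum>n<b. (cmod (c' n))\<^sup>2) = (\<Sum>n<b. if a \<le> n then (cmod (c n))\<^sup>2 else 0)"
        by (rule sum.cong) (auto simp: c'_def)
      also have "\<dots> = (\<Sum>n\<in>{a..<b}. (cmod (c n))\<^sup>2)" by (rule sum_shift_block)
      finally show ?thesis .
    qed
    show ?thesis using fr[of c' b] e1 e2 by simp
  qed
  have coefV: "cinner (\<Sum>n\<in>F. scaleC (c n) (\<phi> n)) (\<psi> k) = (if k \<in> F then c k else 0)"
    if "finite F" for F c k
  proof -
    have "cinner (\<Sum>n\<in>F. scaleC (c n) (\<phi> n)) (\<psi> k) = (\<Sum>n\<in>F. c n * (if n = k then 1 else 0))"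
      by (simp only: cinner_sum_left cinner_scaleC_left bio)
    also have "\<dots> = (\<Sum>n\<in>F. if n = k then c n else 0)" by (rule sum.cong) auto
    also have "\<dots> = (if k \<in> F then c k else 0)" using that by simp
    finally show ?thesis .
  qed
  have besV: "m * (\<Sum>n<N. (cmod (cinner v (\<psi> n)))\<^sup>2) \<le> (norm v)\<^sup>2" if "v \<in> V" for v N
  proof -
    obtain F c where F: "finite F" and v: "v = (\<Sum>n\<in>F. scaleC (c n) (\<phi> n))"
      using \<open>v \<in> V\<close> unfolding V_def by blast
    obtain K where K: "F \<subseteq> {..<K}" using finite_nat_bounded[OF F] by blast
    define N' where "N' = max N K"
    have "(\<Sum>n<N'. scaleC (cinner v (\<psi> n)) (\<phi> n)) = (\<Sum>n<N'. if n \<in> F then scaleC (c n) (\<phi> n) else 0)"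
      by (intro sum.cong refl) (simp add: v coefV F)
    also have "\<dots> = (\<Sum>n\<in>{..<N'} \<inter> F. scaleC (c n) (\<phi> n))"
      by (rule sum.inter_restrict[symmetric]) simp
    also have "{..<N'} \<inter> F = F" using K by (auto simp: N'_def)
    finally have eq: "(\<Sum>n<N'. scaleC (cinner v (\<psi> n)) (\<phi> n)) = v" by (simp add: v)
    have "m * (\<Sum>n<N. (cmod (cinner v (\<psi> n)))\<^sup>2) \<le> m * (\<Sum>n<N'. (cmod (cinner v (\<psi> n)))\<^sup>2)"
      using m by (intro mult_left_mono sum_mono2) (auto simp: N'_def)
    also have "\<dots> \<le> (norm v)\<^sup>2" using fr[of "\<lambda>n. cinner v (\<psi> n)" N'] eq by simp
    finally show ?thesis .
  qed
  have bes: "m * (\<Sum>n<N. (cmod (cinner x (\<psi> n)))\<^sup>2) \<le> (norm x)\<^sup>2" for x N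
  proof -
    have cl: "closed {x. m * (\<Sum>n<N. (cmod (cinner x (\<psi> n)))\<^sup>2) \<le> (norm x)\<^sup>2}"
      by (intro closed_Collect_le continuous_intros)
    have "closure V \<subseteq> {x. m * (\<Sum>n<N. (cmod (cinner x (\<psi> n)))\<^sup>2) \<le> (norm x)\<^sup>2}"
      by (rule closure_minimal[OF _ cl]) (use besV in blast)
    thus ?thesis using dense unfolding V_def by blast
  qed
  have sumc: "summable (\<lambda>n. (cmod (cinner x (\<psi> n)))\<^sup>2)" for x
    by (rule summableI_nonneg_bounded[where x="(norm x)\<^sup>2 / m"]) (use bes m in \<open>auto simp: pos_le_divide_eq mult.commute\<close>)
  have sumle: "m * (\<Sum>n. (cmod (cinner x (\<psi> n)))\<^sup>2) \<le> (norm x)\<^sup>2" for x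
  proof -
    have "(\<Sum>n. (cmod (cinner x (\<psi> n)))\<^sup>2) \<le> (norm x)\<^sup>2 / m"
      by (rule suminf_le_const[OF sumc]) (use bes m in \<open>auto simp: pos_le_divide_eq mult.commute\<close>)
    thus ?thesis using m by (simp add: pos_le_divide_eq mult.commute)
  qed
  define S where "S x = (\<Sum>n. scaleC (cinner x (\<psi> n)) (\<phi> n))" for x
  have Ssm: "summable (\<lambda>n. scaleC (cinner x (\<psi> n)) (\<phi> n))" for x
    by (rule synth(1)[OF blk M sumc])
  have Snorm: "(norm (S x))\<^sup>2 \<le> (M / m) * (norm x)\<^sup>2" for x
  proof -
    have "(norm (S x))\<^sup>2 \<le> M * (\<Sum>n. (cmod (cinner x (\<psi> n)))\<^sup>2)"
      unfolding S_def by (rule synth(2)[OF blk M sumc])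
    also have "\<dots> \<le> M * ((norm x)\<^sup>2 / m)"
      using sumle[of x] m M by (intro mult_left_mono) (auto simp: pos_le_divide_eq mult.commute)
    also have "\<dots> = (M / m) * (norm x)\<^sup>2" by simp
    finally show ?thesis .
  qed
  have Sadd: "S (x + y) = S x + S y" for x y
    unfolding S_def
    by (simp add: cinner_add_left scaleC_add_left suminf_add[OF Ssm Ssm])
  have Sscale: "S (scaleR r x) = scaleR r (S x)" for r x
  proof -
    have "S (scaleR r x) = (\<Sum>n. scaleR r (scaleC (cinner x (\<psi> n)) (\<phi> n)))"
      unfolding S_def by (simp add: cinner_scaleR_left scaleR_scaleC scaleC_scaleC cinner_scaleC_left)
    also have "\<dots> = scaleR r (S x)"
      unfolding S_def by (rule bounded_linear.suminf[OF bounded_linear_scaleR_right Ssm, symmetric])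
    finally show ?thesis .
  qed
  have Sbl: "bounded_linear S"
  proof (rule bounded_linear_intro[where K="sqrt (M / m)"])
    show "S (x + y) = S x + S y" for x y by (rule Sadd)
    show "S (scaleR r x) = scaleR r (S x)" for r x by (rule Sscale)
    show "norm (S x) \<le> norm x * sqrt (M / m)" for x
    proof -
      have "norm (S x) = sqrt ((norm (S x))\<^sup>2)" by simp
      also have "\<dots> \<le> sqrt ((M / m) * (norm x)\<^sup>2)" by (rule real_sqrt_le_mono[OF Snorm])
      also have "\<dots> = norm x * sqrt (M / m)" by (subst real_sqrt_mult) (simp add: mult.commute)
      finally show ?thesis .
    qed
  qed
  have SV: "S v = v" if "v \<in> V" for v
  proof -
    obtain F c where F: "finite F" and v: "v = (\<Sum>n\<in>F. scaleC (c n) (\<phi> n))"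
      using \<open>v \<in> V\<close> unfolding V_def by blast
    have "S v = (\<Sum>n\<in>F. scaleC (cinner v (\<psi> n)) (\<phi> n))"
      unfolding S_def by (rule suminf_finite[OF F]) (simp add: v coefV F)
    also have "\<dots> = v" by (simp add: v coefV F)
    finally show ?thesis .
  qed
  have Sid: "S x = x" for x
  proof -
    have cl: "closed {x. S x = x}"
      by (intro closed_Collect_eq continuous_on_id linear_continuous_on Sbl)
    have "closure V \<subseteq> {x. S x = x}"
      by (rule closure_minimal[OF _ cl]) (use SV in blast)
    thus ?thesis using dense unfolding V_def by blast
  qed
  have "rsys \<phi> \<psi> m M"
    unfolding rsys_def using m M bio sumc sumle blk Ssm Sid
    by (auto simp: S_def sums_iff)
  thus ?thesis by blast
qed

section \<open>The dual system\<close>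

lemma rsys_dual:
  fixes \<phi> \<psi> :: "nat \<Rightarrow> 'a::chilbert"
  assumes R: "rsys \<phi> \<psi> m M"
  shows "rsys \<psi> \<phi> (1 / M) (1 / m)"
proof -
  note m = rsysD(1)[OF R] and M = rsysD(2)[OF R] and bio = rsysD(3)[OF R]
  have bio': "cinner (\<psi> n) (\<phi> k) = (if n = k then 1 else 0)" for n k
    using bio[of k n] cinner_commute[of "\<psi> n" "\<phi> k"] by auto
  have besN: "(\<Sum>n<N. (cmod (cinner y (\<phi> n)))\<^sup>2) \<le> M * (norm y)\<^sup>2" for y N
  proof -
    define S where "S = (\<Sum>n<N. (cmod (cinner y (\<phi> n)))\<^sup>2)"
    define v where "v = (\<Sum>n<N. scaleC (cinner y (\<phi> n)) (\<phi> n))"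
    have "cinner y v = (\<Sum>n<N. cnj (cinner y (\<phi> n)) * cinner y (\<phi> n))"
      unfolding v_def by (simp add: cinner_sum_right cinner_scaleC_right)
    also have "\<dots> = (\<Sum>n<N. complex_of_real ((cmod (cinner y (\<phi> n)))\<^sup>2))"
      by (intro sum.cong refl) (metis complex_norm_square mult.commute)
    also have "\<dots> = complex_of_real S"
      unfolding S_def by (simp only: of_real_sum)
    finally have cS: "cinner y v = complex_of_real S" .
    have S0: "0 \<le> S" unfolding S_def by (simp add: sum_nonneg)
    have "(norm v)\<^sup>2 \<le> M * S"
      using rsysD(6)[OF R, of "\<lambda>n. cinner y (\<phi> n)" 0 N] by (simp add: v_def S_def atLeast0LessThan)
    have "S = cmod (cinner y v)" using cS S0 by simp
    also have "\<dots> \<le> norm y * norm v" by (rule Cauchy_Schwarz)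
    finally have "S \<le> norm y * norm v" .
    hence "S\<^sup>2 \<le> (norm y * norm v)\<^sup>2" using S0 by (intro power_mono) auto
    also have "\<dots> = (norm y)\<^sup>2 * (norm v)\<^sup>2" by (simp add: power_mult_distrib)
    also have "\<dots> \<le> (norm y)\<^sup>2 * (M * S)"
      using \<open>(norm v)\<^sup>2 \<le> M * S\<close> by (intro mult_left_mono) auto
    finally have "S * S \<le> (M * (norm y)\<^sup>2) * S" by (simp add: power2_eq_square algebra_simps)
    hence "S \<le> M * (norm y)\<^sup>2" if "S > 0" using that by simp
    thus ?thesis using S0 M unfolding S_def[symmetric]
      by (cases "S > 0") auto
  qed
  have sumc': "summable (\<lambda>n. (cmod (cinner y (\<phi> n)))\<^sup>2)" for y
    by (rule summableI_nonneg_bounded[where x="M * (norm y)\<^sup>2"]) (use besN in auto)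
  have sumle': "1 / M * (\<Sum>n. (cmod (cinner y (\<phi> n)))\<^sup>2) \<le> (norm y)\<^sup>2" for y
  proof -
    have "(\<Sum>n. (cmod (cinner y (\<phi> n)))\<^sup>2) \<le> M * (norm y)\<^sup>2"
      by (rule suminf_le_const[OF sumc']) (use besN in auto)
    thus ?thesis using M by (simp add: field_simps)
  qed
  have blk': "(norm (\<Sum>n\<in>{a..<b}. scaleC (d n) (\<psi> n)))\<^sup>2 \<le> 1 / m * (\<Sum>n\<in>{a..<b}. (cmod (d n))\<^sup>2)"
    for d a b
  proof -
    define A where "A = {a..<b::nat}"
    define z where "z = (\<Sum>n\<in>A. scaleC (d n) (\<psi> n))"
    have fA: "finite A" by (simp add: A_def)
    have phz: "cinner (\<phi> k) z = (if k \<in> A then cnj (d k) else 0)" for k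
    proof -
      have "cinner (\<phi> k) z = (\<Sum>n\<in>A. cnj (d n) * (if k = n then 1 else 0))"
        unfolding z_def by (simp only: cinner_sum_right cinner_scaleC_right bio)
      also have "\<dots> = (\<Sum>n\<in>A. if n = k then cnj (d n) else 0)" by (rule sum.cong) auto
      also have "\<dots> = (if k \<in> A then cnj (d k) else 0)" using fA by simp
      finally show ?thesis .
    qed
    have "cinner z z = (\<Sum>k. cinner (scaleC (cinner z (\<psi> k)) (\<phi> k)) z)"
      using rsysD(7)[OF R, of z] by (simp add: sums_iff cinner_suminf_left[symmetric])
    also have "\<dots> = (\<Sum>k. cinner z (\<psi> k) * cinner (\<phi> k) z)"
      by (simp add: cinner_scaleC_left)
    also have "\<dots> = (\<Sum>k\<in>A. cinner z (\<psi> k) * cinner (\<phi> k) z)"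
      by (rule suminf_finite[OF fA]) (simp add: phz)
    also have "\<dots> = (\<Sum>k\<in>A. cinner z (\<psi> k) * cnj (d k))"
      by (rule sum.cong) (simp_all add: phz)
    finally have zz: "cinner z z = (\<Sum>k\<in>A. cinner z (\<psi> k) * cnj (d k))" .
    define P where "P = (\<Sum>k\<in>A. (cmod (cinner z (\<psi> k)))\<^sup>2)"
    define D where "D = (\<Sum>k\<in>A. (cmod (d k))\<^sup>2)"
    have "(norm z)\<^sup>2 = cmod (cinner z z)" by (simp add: cinner_self norm_power)
    also have "\<dots> \<le> (\<Sum>k\<in>A. cmod (cinner z (\<psi> k)) * cmod (d k))"
      unfolding zz by (rule order_trans[OF norm_sum]) (simp add: norm_mult)
    finally have z1: "(norm z)\<^sup>2 \<le> (\<Sum>k\<in>A. cmod (cinner z (\<psi> k)) * cmod (d k))" .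
    have P1: "P \<le> (\<Sum>k. (cmod (cinner z (\<psi> k)))\<^sup>2)"
      unfolding P_def by (rule sum_le_suminf[OF rsysD(4)[OF R] fA]) auto
    have P2: "m * (\<Sum>k. (cmod (cinner z (\<psi> k)))\<^sup>2) \<le> (norm z)\<^sup>2" by (rule rsysD(5)[OF R])
    have "m * P \<le> m * (\<Sum>k. (cmod (cinner z (\<psi> k)))\<^sup>2)" using P1 m by (intro mult_left_mono) auto
    hence "m * P \<le> (norm z)\<^sup>2" using P2 by linarith
    hence P3: "P \<le> (norm z)\<^sup>2 / m" using m by (simp add: pos_le_divide_eq mult.commute)
    have "((norm z)\<^sup>2)\<^sup>2 \<le> (\<Sum>k\<in>A. cmod (cinner z (\<psi> k)) * cmod (d k))\<^sup>2"
      using z1 by (intro power_mono) auto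
    also have "\<dots> \<le> P * D" unfolding P_def D_def by (rule Cauchy_Schwarz_ineq_sum)
    also have "P * D \<le> (norm z)\<^sup>2 / m * D"
      using P3 by (intro mult_right_mono) (auto simp: D_def sum_nonneg)
    finally have "(norm z)\<^sup>2 * (norm z)\<^sup>2 \<le> (D / m) * (norm z)\<^sup>2" by (simp add: power2_eq_square mult.commute mult.left_commute)
    hence "(norm z)\<^sup>2 \<le> D / m" if "z \<noteq> 0" by (rule mult_right_le_imp_le) (use that in simp)
    hence "(norm z)\<^sup>2 \<le> D / m" using m by (cases "z = 0") (auto simp: D_def sum_nonneg)
    thus ?thesis by (simp add: z_def D_def A_def)
  qed
  have m': "0 < 1 / m" using m by simp
  have M': "0 < 1 / M" using M by simp
  have exp': "(\<lambda>n. scaleC (cinner y (\<phi> n)) (\<psi> n)) sums y" for y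
  proof -
    have sm: "summable (\<lambda>n. scaleC (cinner y (\<phi> n)) (\<psi> n))"
      by (rule synth(1)[OF blk' m' sumc'])
    define w where "w = (\<Sum>n. scaleC (cinner y (\<phi> n)) (\<psi> n))"
    have "cinner x (w - y) = 0" for x
    proof -
      have smx: "summable (\<lambda>n. scaleC (cinner x (\<psi> n)) (\<phi> n))"
        using rsysD(7)[OF R, of x] by (simp add: sums_iff)
      have "cinner w x = (\<Sum>n. cinner y (\<phi> n) * cinner (\<psi> n) x)"
        unfolding w_def by (simp add: cinner_suminf_left[OF sm] cinner_scaleC_left)
      moreover have "cinner y x = (\<Sum>n. cinner y (\<phi> n) * cinner (\<psi> n) x)"
      proof -
        have "cinner y x = cinner y (\<Sum>n. scaleC (cinner x (\<psi> n)) (\<phi> n))"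
          using rsysD(7)[OF R, of x] by (simp add: sums_iff)
        also have "\<dots> = (\<Sum>n. cnj (cinner x (\<psi> n)) * cinner y (\<phi> n))"
          by (simp add: cinner_suminf_right[OF smx] cinner_scaleC_right)
        finally show ?thesis by (simp add: cinner_commute[of x] mult.commute)
      qed
      ultimately have "cinner (w - y) x = 0" by (simp add: cinner_diff_left)
      thus ?thesis by (metis cinner_commute complex_cnj_zero)
    qed
    hence "w = y" using cinner_eq_zeroI[of "w - y"] by simp
    thus ?thesis using sm by (simp add: w_def sums_iff)
  qed
  show ?thesis
    unfolding rsys_def using m' M' bio' sumc' sumle' blk' exp' by auto
qed

definition diag :: "(nat \<Rightarrow> complex) \<Rightarrow> (nat \<Rightarrow> 'a::chilbert) \<Rightarrow> (nat \<Rightarrow> 'a) \<Rightarrow> 'a \<Rightarrow> 'a" where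
  "diag g \<phi> \<psi> x = (\<Sum>n. scaleC (g n * cinner x (\<psi> n)) (\<phi> n))"

lemma rs_semigroup_diag:
  "rs_semigroup lam \<phi> \<psi> t = diag (\<lambda>n. exp (complex_of_real t * lam n)) \<phi> \<psi>"
  by (rule ext) (simp add: rs_semigroup_def diag_def)

lemma bounded_coeff_summable:
  fixes \<psi> :: "nat \<Rightarrow> 'a::chilbert"
  assumes R: "rsys \<phi> \<psi> m M" and B: "\<And>n. cmod (g n) \<le> B"
  shows "summable (\<lambda>n. (cmod (g n * cinner x (\<psi> n)))\<^sup>2)"
proof (rule summable_comparison_test'[where N=0])
  show "summable (\<lambda>n. B\<^sup>2 * (cmod (cinner x (\<psi> n)))\<^sup>2)"
    by (intro summable_mult rsysD(4)[OF R])
  fix n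
  have "(cmod (g n))\<^sup>2 \<le> B\<^sup>2" using B[of n] by (intro power_mono) auto
  hence "(cmod (g n))\<^sup>2 * (cmod (cinner x (\<psi> n)))\<^sup>2 \<le> B\<^sup>2 * (cmod (cinner x (\<psi> n)))\<^sup>2"
    by (intro mult_right_mono) auto
  thus "norm ((cmod (g n * cinner x (\<psi> n)))\<^sup>2) \<le> B\<^sup>2 * (cmod (cinner x (\<psi> n)))\<^sup>2"
    by (simp add: norm_mult power_mult_distrib)
qed

lemma diag_props:
  fixes \<phi> \<psi> :: "nat \<Rightarrow> 'a::chilbert"
  assumes R: "rsys \<phi> \<psi> m M" and B: "\<And>n. cmod (g n) \<le> B"
  shows "summable (\<lambda>n. scaleC (g n * cinner x (\<psi> n)) (\<phi> n))"
    "cinner (diag g \<phi> \<psi> x) (\<psi> k) = g k * cinner x (\<psi> k)"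
    "(norm (diag g \<phi> \<psi> x))\<^sup>2 \<le> M * (\<Sum>n. (cmod (g n * cinner x (\<psi> n)))\<^sup>2)"
  using rsys_synth[OF R bounded_coeff_summable[OF R B, where x=x]] unfolding diag_def by auto

lemma resolvent_diag:
  fixes \<phi> \<psi> :: "nat \<Rightarrow> 'a::chilbert"
  assumes R: "rsys \<phi> \<psi> m M" and B: "\<And>n. cmod (g n) \<le> B"
    and eps: "0 < \<epsilon>" "\<And>n. \<epsilon> \<le> cmod (\<mu> - g n)"
  shows "resolvent \<mu> (diag g \<phi> \<psi>) x = diag (\<lambda>n. 1 / (\<mu> - g n)) \<phi> \<psi> x"
proof -
  define h where "h = (\<lambda>n. 1 / (\<mu> - g n))"
  have nz: "\<mu> - g n \<noteq> 0" for n using eps(1) eps(2)[of n] by auto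
  have hB: "cmod (h n) \<le> 1 / \<epsilon>" for n
    unfolding h_def using eps(1) eps(2)[of n] by (simp add: norm_divide divide_simps)
  define y where "y = diag h \<phi> \<psi> x"
  have cy: "cinner y (\<psi> n) = h n * cinner x (\<psi> n)" for n
    unfolding y_def by (rule diag_props(2)[where g=h, OF R hB])
  have cP: "cinner (scaleC \<mu> z - diag g \<phi> \<psi> z) (\<psi> n) = (\<mu> - g n) * cinner z (\<psi> n)" for z n
    by (simp add: cinner_diff_left cinner_scaleC_left diag_props(2)[OF R B] algebra_simps)
  have P: "scaleC \<mu> y - diag g \<phi> \<psi> y = x"
  proof (rule rsys_ext[OF R])
    fix n
    have canc: "\<And>a c :: complex. a \<noteq> 0 \<Longrightarrow> a * (1 / a * c) = c" by simp
    show "cinner (scaleC \<mu> y - diag g \<phi> \<psi> y) (\<psi> n) = cinner x (\<psi> n)"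
      by (simp only: cP cy h_def, rule canc[OF nz])
  qed
  have U: "z = y" if "scaleC \<mu> z - diag g \<phi> \<psi> z = x" for z
  proof (rule rsys_ext[OF R])
    fix n
    have e: "cinner x (\<psi> n) = (\<mu> - g n) * cinner z (\<psi> n)" using cP[of z n] that by simp
    have "cinner z (\<psi> n) = cinner x (\<psi> n) / (\<mu> - g n)"
      by (metis e nonzero_mult_div_cancel_left nz)
    thus "cinner z (\<psi> n) = cinner y (\<psi> n)" by (simp add: cy h_def)
  qed
  have "resolvent \<mu> (diag g \<phi> \<psi>) x = y"
    unfolding resolvent_def
  proof (rule the_equality)
    show "scaleC \<mu> y - diag g \<phi> \<psi> y = x" by (rule P)
    fix z assume "scaleC \<mu> z - diag g \<phi> \<psi> z = x"
    thus "z = y" by (rule U)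
  qed
  thus ?thesis by (simp add: y_def h_def)
qed

lemma hadjoint_diag:
  fixes \<phi> \<psi> :: "nat \<Rightarrow> 'a::chilbert"
  assumes R: "rsys \<phi> \<psi> m M" and R': "rsys \<psi> \<phi> m' M'" and B: "\<And>n. cmod (g n) \<le> B"
  shows "hadjoint (diag g \<phi> \<psi>) = diag (\<lambda>n. cnj (g n)) \<psi> \<phi>"
proof (rule ext)
  fix y
  have B': "cmod (cnj (g n)) \<le> B" for n using B[of n] by simp
  define w where "w = diag (\<lambda>n. cnj (g n)) \<psi> \<phi> y"
  have adj: "cinner (diag g \<phi> \<psi> x) y = cinner x w" for x
  proof -
    have "cinner (diag g \<phi> \<psi> x) y = (\<Sum>n. g n * cinner x (\<psi> n) * cinner (\<phi> n) y)"
      unfolding diag_def by (simp add: cinner_suminf_left[OF diag_props(1)[OF R B]] cinner_scaleC_left)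
    also have "\<dots> = (\<Sum>n. cnj (cnj (g n) * cinner y (\<phi> n)) * cinner x (\<psi> n))"
      by (simp add: cinner_commute[of y] mult.commute mult.left_commute)
    also have "\<dots> = cinner x w"
      unfolding w_def diag_def
      by (simp add: cinner_suminf_right[OF diag_props(1)[where g="\<lambda>n. cnj (g n)", OF R' B']] cinner_scaleC_right)
    finally show ?thesis .
  qed
  have U: "z = w" if "\<forall>x. cinner (diag g \<phi> \<psi> x) y = cinner x z" for z
  proof -
    have "cinner x (z - w) = 0" for x using that adj[of x] by (simp add: cinner_diff_right)
    thus ?thesis using cinner_eq_zeroI[of "z - w"] by simp
  qed
  show "hadjoint (diag g \<phi> \<psi>) y = diag (\<lambda>n. cnj (g n)) \<psi> \<phi> y"
    unfolding hadjoint_def w_def[symmetric]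
  proof (rule the_equality)
    show "\<forall>x. cinner (diag g \<phi> \<psi> x) y = cinner x w" using adj by blast
    fix z assume "\<forall>x. cinner (diag g \<phi> \<psi> x) y = cinner x z"
    thus "z = w" by (rule U)
  qed
qed

lemma resolvent_norm_bound:
  fixes \<phi> \<psi> :: "nat \<Rightarrow> 'a::chilbert"
  assumes R: "rsys \<phi> \<psi> m M" and B: "\<And>n. cmod (g n) \<le> B"
    and eps: "0 < \<epsilon>" "\<And>n. \<epsilon> \<le> cmod (\<mu> - g n)"
  shows "summable (\<lambda>n. (cmod (cinner x (\<psi> n)))\<^sup>2 / (cmod (\<mu> - g n))\<^sup>2)"
    "(norm (resolvent \<mu> (diag g \<phi> \<psi>) x))\<^sup>2
       \<le> M * (\<Sum>n. (cmod (cinner x (\<psi> n)))\<^sup>2 / (cmod (\<mu> - g n))\<^sup>2)"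
proof -
  have hB: "cmod (1 / (\<mu> - g n)) \<le> 1 / \<epsilon>" for n
    using eps(1) eps(2)[of n] by (simp add: norm_divide divide_simps)
  have eq: "(\<lambda>n. (cmod (1 / (\<mu> - g n) * cinner x (\<psi> n)))\<^sup>2)
      = (\<lambda>n. (cmod (cinner x (\<psi> n)))\<^sup>2 / (cmod (\<mu> - g n))\<^sup>2)"
    by (simp add: norm_mult norm_divide power_divide power_mult_distrib)
  show "summable (\<lambda>n. (cmod (cinner x (\<psi> n)))\<^sup>2 / (cmod (\<mu> - g n))\<^sup>2)"
    using bounded_coeff_summable[where g="\<lambda>n. 1 / (\<mu> - g n)", OF R hB, where x=x] eq by simp
  show "(norm (resolvent \<mu> (diag g \<phi> \<psi>) x))\<^sup>2
       \<le> M * (\<Sum>n. (cmod (cinner x (\<psi> n)))\<^sup>2 / (cmod (\<mu> - g n))\<^sup>2)"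
    using diag_props(3)[where g="\<lambda>n. 1 / (\<mu> - g n)", OF R hB, where x=x] eq resolvent_diag[OF R B eps] by simp
qed

lemma circ_pointwise:
  fixes a w :: complex and r :: real
  assumes r: "0 < r" and a: "cmod a < r" and w: "cmod w = 1"
  shows "1 / (complex_of_real (r\<^sup>2) - cnj a * (complex_of_real r * w)) / (complex_of_real r * w - a)
           * complex_of_real r * \<i> * w
         = \<i> * complex_of_real (1 / (cmod (complex_of_real r * w - a))\<^sup>2)"
proof -
  have w0: "w \<noteq> 0" using w by auto
  have cw: "cnj w = 1 / w"
  proof -
    have "w * cnj w = 1" using w complex_norm_square[of w] by simp
    thus ?thesis using w0 by (simp add: field_simps)
  qed
  have n1: "complex_of_real r * w - a \<noteq> 0"
  proof
    assume "complex_of_real r * w - a = 0"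
    hence "a = complex_of_real r * w" by simp
    hence "cmod a = r" using w r by (simp add: norm_mult)
    thus False using a by simp
  qed
  have n2: "complex_of_real r - cnj a * w \<noteq> 0"
  proof
    assume "complex_of_real r - cnj a * w = 0"
    hence "cmod (cnj a * w) = r" using r by (metis eq_iff_diff_eq_0 norm_of_real abs_of_pos)
    thus False using a w by (simp add: norm_mult)
  qed
  have n3: "complex_of_real (r\<^sup>2) - cnj a * (complex_of_real r * w)
      = complex_of_real r * (complex_of_real r - cnj a * w)"
    by (simp add: algebra_simps power2_eq_square)
  have cc: "complex_of_real ((cmod (complex_of_real r * w - a))\<^sup>2)
      = (complex_of_real r * w - a) * (complex_of_real r * (1 / w) - cnj a)"
  proof -
    have "complex_of_real ((cmod (complex_of_real r * w - a))\<^sup>2)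
        = (complex_of_real r * w - a) * cnj (complex_of_real r * w - a)"
      by (rule complex_norm_square)
    also have "cnj (complex_of_real r * w - a) = complex_of_real r * (1 / w) - cnj a"
      by (simp add: cw)
    finally show ?thesis .
  qed
  have r0: "complex_of_real r \<noteq> 0" using r by simp
  have "(complex_of_real r * w - a) * (complex_of_real r * (1 / w) - cnj a)
      = (complex_of_real r * w - a) * (complex_of_real r - cnj a * w) / w"
    using w0 by (simp add: field_simps)
  hence cc2: "complex_of_real ((cmod (complex_of_real r * w - a))\<^sup>2)
      = (complex_of_real r * w - a) * (complex_of_real r - cnj a * w) / w" using cc by simp
  have aux: "\<And>R X Y (v::complex). R \<noteq> 0 \<Longrightarrow> X \<noteq> 0 \<Longrightarrow> Y \<noteq> 0 \<Longrightarrow> v \<noteq> 0 \<Longrightarrow>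
      1 / (R * X) / Y * R * \<i> * v = \<i> * (1 / (Y * X / v))"
    by (simp add: field_simps)
  show ?thesis
    unfolding n3 of_real_divide of_real_1 cc2 by (rule aux[OF r0 n2 n1 w0])
qed

lemma circ_int:
  fixes a :: complex and r :: real
  assumes r: "0 < r" and a: "cmod a < r"
  shows "((\<lambda>\<theta>. 1 / (cmod (complex_of_real r * exp (\<i> * complex_of_real \<theta>) - a))\<^sup>2)
          has_integral 2 * pi / (r\<^sup>2 - (cmod a)\<^sup>2)) {0..2*pi}"
proof -
  define f where "f = (\<lambda>u. 1 / (complex_of_real (r\<^sup>2) - cnj a * u))"
  define F where "F = (\<lambda>\<theta>. 1 / (cmod (complex_of_real r * exp (\<i> * complex_of_real \<theta>) - a))\<^sup>2)"
  have den: "complex_of_real (r\<^sup>2) - cnj a * u \<noteq> 0" if "cmod u \<le> r" for u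
  proof
    assume "complex_of_real (r\<^sup>2) - cnj a * u = 0"
    hence "cnj a * u = complex_of_real (r\<^sup>2)" by simp
    hence "cmod (cnj a * u) = r\<^sup>2" by (simp add: norm_power)
    moreover have "cmod (cnj a * u) < r\<^sup>2"
    proof -
      have "cmod (cnj a * u) = cmod a * cmod u" by (simp add: norm_mult)
      also have "\<dots> \<le> cmod a * r" using that by (intro mult_left_mono) auto
      also have "\<dots> < r * r" using a r by (intro mult_strict_right_mono) auto
      finally show ?thesis by (simp add: power2_eq_square)
    qed
    ultimately show False by simp
  qed
  have contf: "continuous_on (cball 0 r) f"
    unfolding f_def by (intro continuous_intros) (use den in auto)
  have holf: "f holomorphic_on (ball 0 r)"
    unfolding f_def by (intro holomorphic_intros) (use den in auto)
  have pt: "f (0 + complex_of_real r * cis t) / (0 + complex_of_real r * cis t - a) * complex_of_real r * \<i> * cis t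
      = \<i> * complex_of_real (F t)" for t
  proof -
    have "cmod (cis t) = 1" by simp
    from circ_pointwise[OF r a this] show ?thesis by (simp only: f_def F_def add_0_left cis_conv_exp)
  qed
  have "((\<lambda>u. f u / (u - a)) has_contour_integral (2 * of_real pi * \<i> * f a)) (circlepath 0 r)"
    by (rule Cauchy_integral_circlepath[OF contf holf]) (use a in simp)
  hence "((\<lambda>t. f (0 + r * cis t) / (0 + r * cis t - a) * r * \<i> * cis t)
           has_integral (2 * of_real pi * \<i> * f a)) {0..2*pi}"
    unfolding circlepath_def by (subst (asm) has_contour_integral_part_circlepath_iff) auto
  hence "((\<lambda>t. \<i> * complex_of_real (F t)) has_integral (2 * of_real pi * \<i> * f a)) {0..2*pi}"
    by (rule has_integral_eq[rotated]) (simp only: pt)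
  hence hi: "((\<lambda>t. complex_of_real (F t)) has_integral (2 * of_real pi * \<i> * f a / \<i>)) {0..2*pi}"
    by (subst (asm) has_integral_mult_right_iff) auto
  have ca: "cnj a * a = complex_of_real ((cmod a)\<^sup>2)" by (metis complex_norm_square mult.commute)
  have fa: "f a = complex_of_real (1 / (r\<^sup>2 - (cmod a)\<^sup>2))"
  proof -
    have "f a = 1 / (complex_of_real (r\<^sup>2) - complex_of_real ((cmod a)\<^sup>2))"
      unfolding f_def by (simp only: ca)
    also have "\<dots> = complex_of_real (1 / (r\<^sup>2 - (cmod a)\<^sup>2))" by simp
    finally show ?thesis .
  qed
  have v1: "2 * of_real pi * \<i> * f a / \<i> = 2 * of_real pi * f a" by (simp add: field_simps)
  have val: "2 * of_real pi * \<i> * f a / \<i> = complex_of_real (2 * pi / (r\<^sup>2 - (cmod a)\<^sup>2))"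
    unfolding v1 by (simp add: fa)
  have "((\<lambda>t. complex_of_real (F t)) has_integral complex_of_real (2 * pi / (r\<^sup>2 - (cmod a)\<^sup>2))) {0..2*pi}"
    using hi unfolding val .
  from has_integral_linear[OF this bounded_linear_Re]
  show ?thesis by (simp add: o_def F_def)
qed

lemma circ_cont:
  fixes a :: complex and r :: real
  assumes "0 < r" "cmod a \<noteq> r"
  shows "continuous_on S (\<lambda>\<theta>. 1 / (cmod (complex_of_real r * exp (\<i> * complex_of_real \<theta>) - a))\<^sup>2)"
proof -
  have "complex_of_real r * exp (\<i> * complex_of_real \<theta>) - a \<noteq> 0" for \<theta>
  proof
    assume "complex_of_real r * exp (\<i> * complex_of_real \<theta>) - a = 0"
    hence "cmod a = cmod (complex_of_real r * exp (\<i> * complex_of_real \<theta>))" by simp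
    also have "\<dots> = r" using assms by (simp add: norm_mult)
    finally show False using assms by simp
  qed
  thus ?thesis by (intro continuous_intros) auto
qed

lemma circ_int_out:
  fixes a :: complex and r :: real
  assumes r: "0 < r" and a: "r < cmod a"
  shows "(\<lambda>\<theta>. 1 / (cmod (complex_of_real r * exp (\<i> * complex_of_real \<theta>) - a))\<^sup>2) integrable_on {0..2*pi}"
    and "integral {0..2*pi} (\<lambda>\<theta>. 1 / (cmod (complex_of_real r * exp (\<i> * complex_of_real \<theta>) - a))\<^sup>2)
           \<le> 2 * pi / (cmod a - r)\<^sup>2"
proof -
  show int: "(\<lambda>\<theta>. 1 / (cmod (complex_of_real r * exp (\<i> * complex_of_real \<theta>) - a))\<^sup>2) integrable_on {0..2*pi}"
    by (rule integrable_continuous_interval[OF circ_cont]) (use r a in auto)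
  have pt: "1 / (cmod (complex_of_real r * exp (\<i> * complex_of_real \<theta>) - a))\<^sup>2 \<le> 1 / (cmod a - r)\<^sup>2" for \<theta>
  proof -
    have "cmod a - r \<le> cmod (complex_of_real r * exp (\<i> * complex_of_real \<theta>) - a)"
      using norm_triangle_ineq3[of a "complex_of_real r * exp (\<i> * complex_of_real \<theta>)"] r
      by (simp add: norm_mult norm_minus_commute)
    hence "(cmod a - r)\<^sup>2 \<le> (cmod (complex_of_real r * exp (\<i> * complex_of_real \<theta>) - a))\<^sup>2"
      using a by (intro power_mono) auto
    moreover have p2: "0 < cmod (complex_of_real r * exp (\<i> * complex_of_real \<theta>) - a)"
      using \<open>cmod a - r \<le> _\<close> a by linarith
    ultimately show ?thesis using a p2 by (intro divide_left_mono mult_pos_pos) auto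
  qed
  have "integral {0..2*pi} (\<lambda>\<theta>. 1 / (cmod (complex_of_real r * exp (\<i> * complex_of_real \<theta>) - a))\<^sup>2)
        \<le> integral {0..2*pi} (\<lambda>\<theta>. 1 / (cmod a - r)\<^sup>2)"
    by (rule integral_le[OF int]) (use pt in auto)
  also have "\<dots> = 2 * pi / (cmod a - r)\<^sup>2" by simp
  finally show "integral {0..2*pi} (\<lambda>\<theta>. 1 / (cmod (complex_of_real r * exp (\<i> * complex_of_real \<theta>) - a))\<^sup>2)
           \<le> 2 * pi / (cmod a - r)\<^sup>2" .
qed

lemma tannery:
  fixes f :: "nat \<Rightarrow> real \<Rightarrow> real" and F :: "real filter"
  assumes dom: "eventually (\<lambda>r. \<forall>n. 0 \<le> f n r \<and> f n r \<le> b n) F"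
    and b: "summable b"
    and lim: "\<And>n. ((\<lambda>r. f n r) \<longlongrightarrow> 0) F"
  shows "((\<lambda>r. \<Sum>n. f n r) \<longlongrightarrow> 0) F"
proof (rule tendstoI)
  fix e :: real assume e: "0 < e"
  obtain N where N: "norm (\<Sum>i. b (i + N)) < e/2"
    using suminf_exist_split[OF _ b, of "e/2"] e by auto
  have "((\<lambda>r. \<Sum>n<N. f n r) \<longlongrightarrow> (\<Sum>n<N. 0)) F"
    by (intro tendsto_sum lim)
  hence "((\<lambda>r. \<Sum>n<N. f n r) \<longlongrightarrow> 0) F" by simp
  hence ev0: "eventually (\<lambda>r. dist (\<Sum>n<N. f n r) 0 < e/2) F"
    by (rule tendstoD) (use e in simp)
  have ev1: "eventually (\<lambda>r. \<bar>\<Sum>n<N. f n r\<bar> < e/2) F"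
    using ev0 by (rule eventually_mono) (simp add: dist_real_def)
  show "eventually (\<lambda>r. dist (\<Sum>n. f n r) 0 < e) F"
    using eventually_conj[OF dom ev1]
  proof (rule eventually_mono)
    fix r assume H: "(\<forall>n. 0 \<le> f n r \<and> f n r \<le> b n) \<and> \<bar>\<Sum>n<N. f n r\<bar> < e/2"
    have sf: "summable (\<lambda>n. f n r)"
      by (rule summable_comparison_test'[OF b, of 0]) (use H in auto)
    have sft: "summable (\<lambda>i. f (i + N) r)" using summable_ignore_initial_segment[OF sf] .
    have sbt: "summable (\<lambda>i. b (i + N))" using summable_ignore_initial_segment[OF b] .
    have sp: "(\<Sum>n. f n r) = (\<Sum>i. f (i + N) r) + (\<Sum>n<N. f n r)"
      by (rule suminf_split_initial_segment[OF sf])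
    have t1: "(\<Sum>i. f (i + N) r) \<le> (\<Sum>i. b (i + N))"
      by (rule suminf_le[OF _ sft sbt]) (use H in auto)
    have t2: "(\<Sum>i. b (i + N)) < e/2" using N by simp
    have nn: "0 \<le> (\<Sum>n. f n r)" by (rule suminf_nonneg[OF sf]) (use H in auto)
    have "\<bar>\<Sum>n<N. f n r\<bar> < e/2" using H by blast
    hence t3: "(\<Sum>n<N. f n r) < e/2" using abs_ge_self[of "\<Sum>n<N. f n r"] by linarith
    have "(\<Sum>n. f n r) < e" using sp t1 t2 t3 by linarith
    thus "dist (\<Sum>n. f n r) 0 < e" using nn by (simp add: dist_real_def)
  qed
qed

lemma Lambda_tendsto:
  assumes s: "0 < s" "s \<le> 1/2"
  shows "((\<lambda>r. Lambda s r) \<longlongrightarrow> 0) (at_right 1)"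
proof (cases "s < 1/2")
  case True
  have "((\<lambda>r::real. r - 1) \<longlongrightarrow> 1 - 1) (at_right 1)"
    by (intro tendsto_intros)
  hence lim1: "((\<lambda>r::real. r - 1) \<longlongrightarrow> 0) (at_right 1)" by simp
  have "((\<lambda>r. (r - 1) powr (1 - 2 * s)) \<longlongrightarrow> 0) (at_right 1)"
  proof (rule tendsto_zero_powrI[OF lim1 tendsto_const])
    show "\<forall>\<^sub>F r in at_right 1. 0 \<le> r - (1::real)"
      using eventually_at_right_less[of "1::real"] by (rule eventually_mono) simp
    show "0 < 1 - 2 * s" using True by simp
  qed
  thus ?thesis using True by (simp add: Lambda_def)
next
  case False
  have "filterlim (\<lambda>r. ln (r - 1)) at_bot (at_right (1::real))"
    by (subst filterlim_at_right_to_0) (simp add: ln_at_0)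
  hence bot: "filterlim (\<lambda>r. - ln (r - 1)) at_top (at_right (1::real))"
    by (simp add: filterlim_uminus_at_top)
  have ev: "eventually (\<lambda>r. - ln (r - 1) = \<bar>ln (r - 1)\<bar>) (at_right (1::real))"
  proof -
    have "eventually (\<lambda>r. 0 \<le> - ln (r - 1)) (at_right (1::real))"
      using bot unfolding filterlim_at_top by blast
    thus ?thesis by (rule eventually_mono) auto
  qed
  have t1: "((\<lambda>r. inverse (- ln (r - 1))) \<longlongrightarrow> 0) (at_right (1::real))"
    by (rule tendsto_inverse_0_at_top[OF bot])
  have ev2: "eventually (\<lambda>r. inverse (- ln (r - 1)) = 1 / \<bar>ln (r - 1)\<bar>) (at_right (1::real))"
    using ev by (rule eventually_mono) (metis inverse_eq_divide)
  have "((\<lambda>r. 1 / \<bar>ln (r - 1)\<bar>) \<longlongrightarrow> 0) (at_right (1::real))"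
    using Lim_transform_eventually[OF t1 ev2] .
  thus ?thesis using False by (simp add: Lambda_def)
qed

lemma Lambda_le1:
  assumes s: "0 < s" "s \<le> 1/2" and r: "1 < r" "r - 1 < exp (-1)"
  shows "0 \<le> Lambda s r" "Lambda s r \<le> 1"
proof -
  have e1: "exp (-1) < (1::real)" by simp
  show "0 \<le> Lambda s r" by (simp add: Lambda_def)
  show "Lambda s r \<le> 1"
  proof (cases "s < 1/2")
    case True
    have "r \<le> 2" using r e1 by linarith
    hence "(r - 1) powr (1 - 2 * s) \<le> 1"
      using r True by (intro powr_le1) auto
    thus ?thesis using True by (simp add: Lambda_def)
  next
    case False
    have "ln (r - 1) < ln (exp (-1))" using r by (subst ln_less_cancel_iff) auto
    hence "ln (r - 1) < -1" by simp
    hence "1 \<le> \<bar>ln (r - 1)\<bar>" by simp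
    thus ?thesis using False by (simp add: Lambda_def)
  qed
qed

lemma finite_pos_lower:
  fixes P :: "'a \<Rightarrow> real"
  assumes "finite A" "\<And>n. n \<in> A \<Longrightarrow> 0 < P n"
  shows "\<exists>d>0. \<forall>n\<in>A. d \<le> P n"
  using assms
proof (induction A rule: finite_induct)
  case empty thus ?case by (auto intro: exI[of _ 1])
next
  case (insert a A)
  then obtain d where d: "d > 0" "\<forall>n\<in>A. d \<le> P n" by auto
  show ?case using insert.prems d
    by (intro exI[of _ "min d (P a)"]) auto
qed

lemma one_minus_exp_neg:
  fixes x :: real
  assumes "0 \<le> x" "x \<le> 1"
  shows "x / 2 \<le> 1 - exp (- x)"
proof -
  have e: "1 + x \<le> exp x" by simp
  have "exp (-x) * (1 + x) \<le> exp (-x) * exp x" using e by (intro mult_left_mono) auto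
  also have "\<dots> = 1" by (simp add: exp_minus)
  finally have e2: "exp (-x) * (1 + x) \<le> 1" .
  have h: "x * x \<le> x" using assms mult_left_le_one_le[of x x] by simp
  have "(1 - x / 2) * (1 + x) = 1 + x / 2 - x * x / 2" by (simp add: field_simps)
  hence h2: "1 \<le> (1 - x / 2) * (1 + x)" using h by linarith
  have "exp (-x) * (1 + x) \<le> (1 - x / 2) * (1 + x)" using e2 h2 by linarith
  hence "exp (-x) \<le> 1 - x / 2" using assms by (simp add: mult_le_cancel_right)
  thus ?thesis by simp
qed

lemma key_ineq:
  fixes lam :: complex and \<omega> \<alpha> \<Upsilon> \<tau> \<delta> r :: real
  assumes pos: "0 < \<omega>" "0 < \<alpha>" "0 < \<Upsilon>" "0 < \<tau>"
    and \<delta>: "0 < \<delta>" "\<delta> \<le> \<alpha> / 2"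
    and out: "Re lam \<le> - \<omega> \<or> lam \<in> Omega \<alpha> \<Upsilon>"
    and r: "1 < r" "r - 1 < exp (-1)"
  defines "s \<equiv> \<delta> / \<alpha>"
  defines "C \<equiv> 1 / ((1 - exp (- \<tau> * \<omega>)) * \<omega> powr (2 * \<delta>)) + 2 * \<tau> powr (2 * \<delta>)
               + 2 / ((\<tau> * \<Upsilon>) powr (2 * s))"
  shows "Lambda s r / (r - exp (\<tau> * Re lam)) \<le> C * cmod lam powr (2 * \<delta>)"
    and "exp (\<tau> * Re lam) < 1"
proof -
  have s: "0 < s" "s \<le> 1/2" using \<delta> pos by (auto simp: s_def field_simps)
  have L: "0 \<le> Lambda s r" "Lambda s r \<le> 1" using Lambda_le1[OF s r] by auto
  have e1: "1 - exp (- \<tau> * \<omega>) > 0" using pos by simp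
  have C1: "0 \<le> 1 / ((1 - exp (- \<tau> * \<omega>)) * \<omega> powr (2 * \<delta>))" using e1 by simp
  have C2: "0 \<le> 2 * \<tau> powr (2 * \<delta>)" by simp
  have C3: "0 \<le> 2 / ((\<tau> * \<Upsilon>) powr (2 * s))" by simp
  have lampos: "0 < cmod lam powr (2 * \<delta>)"
  proof -
    have "lam \<noteq> 0" using out pos unfolding Omega_def by auto
    thus ?thesis by simp
  qed
  have neg: "Re lam < 0"
  proof (cases "Re lam \<le> - \<omega>")
    case True thus ?thesis using pos by simp
  next
    case False
    hence "lam \<in> Omega \<alpha> \<Upsilon>" using out by simp
    hence im: "Im lam \<noteq> 0" and re: "Re lam \<le> - \<Upsilon> / (\<bar>Im lam\<bar> powr \<alpha>)"
      unfolding Omega_def by auto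
    have "0 < \<Upsilon> / (\<bar>Im lam\<bar> powr \<alpha>)" using im pos by simp
    thus ?thesis using re by simp
  qed
  show a1: "exp (\<tau> * Re lam) < 1" using neg pos by (simp add: mult_pos_neg)
  have rpos: "0 < r - exp (\<tau> * Re lam)" using a1 r by linarith
  consider (A) "Re lam \<le> - \<omega>" | (B) "lam \<in> Omega \<alpha> \<Upsilon>" "Re lam > - \<omega>" using out by force
  thus "Lambda s r / (r - exp (\<tau> * Re lam)) \<le> C * cmod lam powr (2 * \<delta>)"
  proof cases
    case A
    have "\<tau> * Re lam \<le> \<tau> * (- \<omega>)" using A pos by (intro mult_left_mono) auto
    hence "exp (\<tau> * Re lam) \<le> exp (- \<tau> * \<omega>)" by simp
    hence d1: "1 - exp (- \<tau> * \<omega>) \<le> r - exp (\<tau> * Re lam)" using r by linarith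
    have "Lambda s r / (r - exp (\<tau> * Re lam)) \<le> 1 / (1 - exp (- \<tau> * \<omega>))"
      using L d1 e1 rpos by (intro frac_le) auto
    also have "\<dots> = 1 / ((1 - exp (- \<tau> * \<omega>)) * \<omega> powr (2 * \<delta>)) * \<omega> powr (2 * \<delta>)"
    proof -
      have "0 < \<omega> powr (2 * \<delta>)" using pos by simp
      thus ?thesis by simp
    qed
    also have "\<dots> \<le> 1 / ((1 - exp (- \<tau> * \<omega>)) * \<omega> powr (2 * \<delta>)) * cmod lam powr (2 * \<delta>)"
    proof (intro mult_left_mono C1 powr_mono2)
      show "\<omega> \<le> cmod lam" using A abs_Re_le_cmod[of lam] by linarith
    qed (use pos \<delta> in auto)
    also have "\<dots> \<le> C * cmod lam powr (2 * \<delta>)"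
      unfolding C_def using C2 C3 lampos by (intro mult_right_mono) auto
    finally show ?thesis .
  next
    case B
    define t where "t = \<bar>Im lam\<bar>"
    have t: "0 < t" using B unfolding Omega_def t_def by auto
    have Rl: "Re lam \<le> - \<Upsilon> / t powr \<alpha>" using B unfolding Omega_def t_def by auto
    define x where "x = \<tau> * \<Upsilon> / t powr \<alpha>"
    have x: "0 < x" using t pos by (simp add: x_def)
    have "\<tau> * Re lam \<le> \<tau> * (- \<Upsilon> / t powr \<alpha>)" using Rl pos by (intro mult_left_mono) auto
    hence tRe: "\<tau> * Re lam \<le> - x" by (simp add: x_def)
    have rl: "(r - 1) + (1 - exp (- x)) \<le> r - exp (\<tau> * Re lam)" using tRe by simp
    have tl: "t \<le> cmod lam" unfolding t_def by (rule abs_Im_le_cmod)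
    show ?thesis
    proof (cases "1 \<le> x")
      case True
      have "exp (- x) \<le> exp (-1)" using True by simp
      moreover have "exp (-1::real) \<le> 1/2"
      proof -
        have "2 \<le> exp (1::real)" using exp_ge_add_one_self[of "1::real"] by simp
        thus ?thesis by (simp add: exp_minus field_simps)
      qed
      ultimately have h: "1/2 \<le> r - exp (\<tau> * Re lam)" using rl r by linarith
      have "Lambda s r / (r - exp (\<tau> * Re lam)) \<le> 1 / (1/2)"
        using L h by (intro frac_le) auto
      also have "\<dots> = 2 * \<tau> powr (2 * \<delta>) * (1 / \<tau>) powr (2 * \<delta>)"
        using pos by (simp add: powr_divide)
      also have "\<dots> \<le> 2 * \<tau> powr (2 * \<delta>) * cmod lam powr (2 * \<delta>)"
      proof (intro mult_left_mono powr_mono2)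
        have "1 / \<tau> \<le> x / \<tau>" using True pos by (simp add: divide_right_mono)
        also have "x / \<tau> = \<Upsilon> / t powr \<alpha>" using pos by (simp add: x_def)
        also have "\<dots> \<le> - Re lam" using Rl by simp
        also have "\<dots> \<le> cmod lam" using abs_Re_le_cmod[of lam] by linarith
        finally show "1 / \<tau> \<le> cmod lam" .
      qed (use pos \<delta> in auto)
      also have "\<dots> \<le> C * cmod lam powr (2 * \<delta>)"
        unfolding C_def using C1 C3 lampos by (intro mult_right_mono) auto
      finally show ?thesis .
    next
      case False
      have "x / 2 \<le> 1 - exp (- x)" using False x by (intro one_minus_exp_neg) auto
      hence h: "(r - 1) + x / 2 \<le> r - exp (\<tau> * Re lam)" using rl by linarith
      have hp: "0 < (r - 1) + x / 2" using r x by simp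
      have Lx: "Lambda s r * x powr (2 * s) \<le> 2 * ((r - 1) + x / 2)"
      proof (cases "s < 1/2")
        case True
        have "Lambda s r * x powr (2 * s) = (r - 1) powr (1 - 2 * s) * x powr (2 * s)"
          using True by (simp add: Lambda_def)
        also have "\<dots> \<le> (1 - 2 * s) * (r - 1) + 2 * s * x"
          by (rule Youngs_inequality_0) (use True s r x in auto)
        also have "\<dots> \<le> (r - 1) + x"
        proof -
          have "(1 - 2 * s) * (r - 1) \<le> 1 * (r - 1)" using s r by (intro mult_right_mono) auto
          moreover have "2 * s * x \<le> 1 * x" using s x by (intro mult_right_mono) auto
          ultimately show ?thesis by simp
        qed
        finally have L1: "Lambda s r * x powr (2 * s) \<le> (r - 1) + x" .
        have "2 * ((r - 1) + x / 2) = ((r - 1) + x) + (r - 1)" by (simp add: algebra_simps)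
        thus ?thesis using L1 r by linarith
      next
        case False
        hence "s = 1/2" using s by simp
        hence s2: "2 * s = 1" by simp
        have "Lambda s r * x powr (2 * s) = Lambda s r * x" using x by (simp only: s2, simp)
        also have "\<dots> \<le> x" by (rule mult_left_le_one_le) (use L x in auto)
        finally show ?thesis using r by simp
      qed
      have "Lambda s r / (r - exp (\<tau> * Re lam)) \<le> Lambda s r / ((r - 1) + x / 2)"
        using L h hp by (intro divide_left_mono) auto
      also have "\<dots> \<le> 2 / x powr (2 * s)"
      proof -
        have X: "0 < x powr (2 * s)" using x by simp
        have "Lambda s r / ((r - 1) + x / 2) = (Lambda s r * x powr (2 * s)) / (((r - 1) + x / 2) * x powr (2 * s))"
          using X by simp
        also have "\<dots> \<le> (2 * ((r - 1) + x / 2)) / (((r - 1) + x / 2) * x powr (2 * s))"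
          using Lx X hp by (intro divide_right_mono) auto
        also have "\<dots> = 2 / x powr (2 * s)"
        proof -
          have aux: "\<And>h X :: real. h \<noteq> 0 \<Longrightarrow> (2 * h) / (h * X) = 2 / X" by simp
          show ?thesis by (rule aux) (use hp in simp)
        qed
        finally show ?thesis .
      qed
      also have "x powr (2 * s) = (\<tau> * \<Upsilon>) powr (2 * s) / t powr (2 * \<delta>)"
      proof -
        have "x powr (2 * s) = (\<tau> * \<Upsilon>) powr (2 * s) / (t powr \<alpha>) powr (2 * s)"
          unfolding x_def using pos t by (simp add: powr_divide)
        also have "(t powr \<alpha>) powr (2 * s) = t powr (2 * \<delta>)"
          using pos by (simp add: powr_powr s_def)
        finally show ?thesis .
      qed
      also have "2 / ((\<tau> * \<Upsilon>) powr (2 * s) / t powr (2 * \<delta>))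
           = 2 / ((\<tau> * \<Upsilon>) powr (2 * s)) * t powr (2 * \<delta>)" by simp
      also have "\<dots> \<le> 2 / ((\<tau> * \<Upsilon>) powr (2 * s)) * cmod lam powr (2 * \<delta>)"
        using tl t \<delta> by (intro mult_left_mono powr_mono2 C3) auto
      also have "\<dots> \<le> C * cmod lam powr (2 * \<delta>)"
        unfolding C_def using C1 C2 lampos by (intro mult_right_mono) auto
      finally show ?thesis .
    qed
  qed
qed

lemma integral_nonneg':
  fixes f :: "real \<Rightarrow> real"
  assumes "\<And>x. x \<in> S \<Longrightarrow> 0 \<le> f x"
  shows "0 \<le> integral S f"
proof (cases "f integrable_on S")
  case True thus ?thesis using integral_nonneg assms by blast
next
  case False thus ?thesis by (simp add: not_integrable_integral)
qed

lemma J_le_Jb: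
  fixes a d r :: real
  assumes d: "0 < d" and a0: "0 \<le> a" and out: "\<not> a < 1 \<Longrightarrow> 1 + 2 * d \<le> a"
    and r: "1 < r" "r < 1 + d"
  shows "(if a < 1 then 2 * pi / (r\<^sup>2 - a\<^sup>2) else 2 * pi / (a - r)\<^sup>2)
         \<le> (if a < 1 then 2 * pi / (1 - a\<^sup>2) else 2 * pi / d\<^sup>2)"
    and "0 \<le> (if a < 1 then 2 * pi / (r\<^sup>2 - a\<^sup>2) else 2 * pi / (a - r)\<^sup>2)"
proof -
  show "(if a < 1 then 2 * pi / (r\<^sup>2 - a\<^sup>2) else 2 * pi / (a - r)\<^sup>2)
         \<le> (if a < 1 then 2 * pi / (1 - a\<^sup>2) else 2 * pi / d\<^sup>2)"
  proof (cases "a < 1")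
    case True
    have "a\<^sup>2 < 1\<^sup>2" using True a0 by (intro power_strict_mono) auto
    hence a2: "a\<^sup>2 < 1" by simp
    have "1 \<le> r\<^sup>2" using r by (simp add: one_le_power)
    hence "2 * pi / (r\<^sup>2 - a\<^sup>2) \<le> 2 * pi / (1 - a\<^sup>2)"
      using a2 by (intro divide_left_mono mult_pos_pos) auto
    thus ?thesis using True by simp
  next
    case False
    have "d \<le> a - r" using out[OF False] r by simp
    hence "d\<^sup>2 \<le> (a - r)\<^sup>2" using d by (intro power_mono) auto
    hence "2 * pi / (a - r)\<^sup>2 \<le> 2 * pi / d\<^sup>2" using d by (intro divide_left_mono mult_pos_pos) auto
    thus ?thesis using False by simp
  qed
  show "0 \<le> (if a < 1 then 2 * pi / (r\<^sup>2 - a\<^sup>2) else 2 * pi / (a - r)\<^sup>2)"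
  proof (cases "a < 1")
    case True
    have "a\<^sup>2 < r\<^sup>2" using True a0 r by (intro power_strict_mono) auto
    hence "0 \<le> 2 * pi / (r\<^sup>2 - a\<^sup>2)" by (intro divide_nonneg_nonneg) auto
    thus ?thesis using True by simp
  qed simp
qed

lemma main_est:
  fixes \<Phi> \<Psi> :: "nat \<Rightarrow> 'a::chilbert" and G :: "nat \<Rightarrow> complex" and a :: "nat \<Rightarrow> real"
  assumes R: "rsys \<Phi> \<Psi> m M"
    and B: "\<And>n. cmod (G n) \<le> B"
    and aG: "\<And>n. cmod (G n) = a n"
    and d: "0 < d" "\<And>n. 1 < a n \<Longrightarrow> 1 + 2 * d \<le> a n" "\<And>n. a n \<noteq> 1"
    and r: "1 < r" "r < 1 + d"
  shows "summable (\<lambda>n. (cmod (cinner x (\<Psi> n)))\<^sup>2 *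
            (if a n < 1 then 2 * pi / (r\<^sup>2 - (a n)\<^sup>2) else 2 * pi / (a n - r)\<^sup>2))"
    and "integral {0..2*pi} (\<lambda>\<theta>. (norm (resolvent (complex_of_real r * exp (\<i> * complex_of_real \<theta>))
              (diag G \<Phi> \<Psi>) x))\<^sup>2)
         \<le> M * (\<Sum>n. (cmod (cinner x (\<Psi> n)))\<^sup>2 *
            (if a n < 1 then 2 * pi / (r\<^sup>2 - (a n)\<^sup>2) else 2 * pi / (a n - r)\<^sup>2))"
proof -
  define J where "J n = (if a n < 1 then 2 * pi / (r\<^sup>2 - (a n)\<^sup>2) else 2 * pi / (a n - r)\<^sup>2)" for n
  define c where "c n = (cmod (cinner x (\<Psi> n)))\<^sup>2" for n
  define z where "z \<theta> = complex_of_real r * exp (\<i> * complex_of_real \<theta>)" for \<theta>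
  define k where "k n \<theta> = 1 / (cmod (z \<theta> - G n))\<^sup>2" for n \<theta>
  have M: "0 < M" by (rule rsysD(2)[OF R])
  have cz: "cmod (z \<theta>) = r" for \<theta> using r by (simp add: z_def norm_mult)
  have a0: "0 \<le> a n" for n using aG[of n] by (metis norm_ge_zero)
  have out: "1 + 2 * d \<le> a n" if "\<not> a n < 1" for n
    using d(2)[of n] d(3)[of n] that by linarith
  define eps where "eps = min (r - 1) d"
  have eps: "0 < eps" using r d by (simp add: eps_def)
  have sep: "eps \<le> cmod (z \<theta> - G n)" for \<theta> n
  proof (cases "a n < 1")
    case True
    have "r - a n \<le> cmod (z \<theta> - G n)"
      using norm_triangle_ineq2[of "z \<theta>" "G n"] cz aG by simp
    hence "r - 1 \<le> cmod (z \<theta> - G n)" using True by linarith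
    thus ?thesis unfolding eps_def by (rule min.coboundedI1)
  next
    case False
    have "a n - r \<le> cmod (z \<theta> - G n)"
      using norm_triangle_ineq3[of "z \<theta>" "G n"] cz aG by (simp add: abs_le_iff)
    hence "d \<le> cmod (z \<theta> - G n)" using out[OF False] r by linarith
    thus ?thesis unfolding eps_def by (rule min.coboundedI2)
  qed
  have cnn: "0 \<le> c n" for n by (simp add: c_def)
  have csum: "summable c" unfolding c_def by (rule rsysD(4)[OF R])
  have rpos: "0 < r" using r by simp
  have Jnn: "0 \<le> J n" for n
    unfolding J_def by (rule J_le_Jb(2)[OF d(1) a0 out r])
  define K where "K = 2 * pi / (r\<^sup>2 - 1) + 2 * pi / d\<^sup>2"
  have JK: "J n \<le> K" for n
  proof (cases "a n < 1")
    case True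
    have a2: "(a n)\<^sup>2 \<le> 1" using True a0[of n] by (simp add: power_le_one)
    have r2: "1 < r\<^sup>2" using r by (simp add: one_less_power)
    have "2 * pi / (r\<^sup>2 - (a n)\<^sup>2) \<le> 2 * pi / (r\<^sup>2 - 1)"
      using a2 r2 by (intro divide_left_mono mult_pos_pos) auto
    moreover have "0 \<le> 2 * pi / d\<^sup>2" by simp
    ultimately have "2 * pi / (r\<^sup>2 - (a n)\<^sup>2) \<le> K" unfolding K_def by linarith
    thus ?thesis using True by (simp add: J_def)
  next
    case False
    have "d \<le> a n - r" using out[OF False] r by simp
    hence "d\<^sup>2 \<le> (a n - r)\<^sup>2" using d by (intro power_mono) auto
    hence "2 * pi / (a n - r)\<^sup>2 \<le> 2 * pi / d\<^sup>2" using d by (intro divide_left_mono mult_pos_pos) auto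
    moreover have "0 \<le> 2 * pi / (r\<^sup>2 - 1)" using r by (simp add: one_less_power less_imp_le)
    ultimately have "2 * pi / (a n - r)\<^sup>2 \<le> K" unfolding K_def by linarith
    thus ?thesis using False by (simp add: J_def)
  qed
  show sJ: "summable (\<lambda>n. (cmod (cinner x (\<Psi> n)))\<^sup>2 *
            (if a n < 1 then 2 * pi / (r\<^sup>2 - (a n)\<^sup>2) else 2 * pi / (a n - r)\<^sup>2))"
  proof -
    have "summable (\<lambda>n. c n * J n)"
    proof (rule summable_comparison_test'[where N=0])
      show "summable (\<lambda>n. K * c n)" by (intro summable_mult csum)
      show "norm (c n * J n) \<le> K * c n" for n
      proof -
        have h1: "c n * J n \<le> c n * K" by (rule mult_left_mono[OF JK cnn])
        have h2: "0 \<le> c n * J n" using cnn[of n] Jnn[of n] by simp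
        show ?thesis using h1 h2 by (simp add: mult.commute)
      qed
    qed
    thus ?thesis by (simp add: c_def J_def)
  qed
  hence sJ': "summable (\<lambda>n. c n * J n)" by (simp add: c_def J_def)
  have kcont: "continuous_on S (k n)" for n S
  proof -
    have "cmod (G n) \<noteq> r" using aG[of n] out[of n] r d by (cases "a n < 1") auto
    thus ?thesis unfolding k_def z_def by (rule circ_cont[OF rpos])
  qed
  have kint: "k n integrable_on {0..2*pi}" for n
    by (rule integrable_continuous_interval[OF kcont])
  have kJ: "integral {0..2*pi} (k n) \<le> J n" for n
  proof (cases "a n < 1")
    case True
    have "cmod (G n) < r" using True aG[of n] r by simp
    from circ_int[OF rpos this]
    have "integral {0..2*pi} (k n) = 2 * pi / (r\<^sup>2 - (cmod (G n))\<^sup>2)"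
      unfolding k_def z_def by (rule integral_unique)
    thus ?thesis using True aG[of n] by (simp add: J_def)
  next
    case False
    have "r < cmod (G n)" using out[OF False] aG[of n] r d by simp
    from circ_int_out(2)[OF rpos this]
    have "integral {0..2*pi} (k n) \<le> 2 * pi / (cmod (G n) - r)\<^sup>2"
      unfolding k_def z_def .
    thus ?thesis using False aG[of n] by (simp add: J_def)
  qed
  have knn: "0 \<le> k n \<theta>" for n \<theta> by (simp add: k_def)
  have pw_sum: "summable (\<lambda>n. c n * k n \<theta>)" for \<theta>
    using resolvent_norm_bound(1)[OF R B eps sep[of \<theta>], where x=x] by (simp add: c_def k_def)
  have pw: "(norm (resolvent (z \<theta>) (diag G \<Phi> \<Psi>) x))\<^sup>2 \<le> M * (\<Sum>n. c n * k n \<theta>)" for \<theta>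
    using resolvent_norm_bound(2)[OF R B eps sep[of \<theta>], where x=x] by (simp add: c_def k_def z_def)
  define f where "f N \<theta> = M * (\<Sum>n<N. c n * k n \<theta>)" for N \<theta>
  define g where "g \<theta> = M * (\<Sum>n. c n * k n \<theta>)" for \<theta>
  have fint: "f N integrable_on {0..2*pi}" for N
    unfolding f_def by (intro integrable_continuous_interval continuous_intros kcont)
  have fmono: "f N \<theta> \<le> f (Suc N) \<theta>" for N \<theta>
  proof -
    have "0 \<le> M * (c N * k N \<theta>)" using M cnn[of N] knn[of N \<theta>] by (intro mult_nonneg_nonneg) auto
    thus ?thesis unfolding f_def by (simp add: algebra_simps)
  qed
  have flim: "(\<lambda>N. f N \<theta>) \<longlonglongrightarrow> g \<theta>" for \<theta>
    unfolding f_def g_def by (intro tendsto_mult_left summable_LIMSEQ pw_sum)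
  have fI: "integral {0..2*pi} (f N) = M * (\<Sum>n<N. c n * integral {0..2*pi} (k n))" for N
  proof -
    have "integral {0..2*pi} (f N) = M * integral {0..2*pi} (\<lambda>\<theta>. \<Sum>n<N. c n * k n \<theta>)"
      unfolding f_def by simp
    also have "integral {0..2*pi} (\<lambda>\<theta>. \<Sum>n<N. c n * k n \<theta>) = (\<Sum>n<N. integral {0..2*pi} (\<lambda>\<theta>. c n * k n \<theta>))"
      by (rule integral_sum) (auto intro!: integrable_continuous_interval continuous_intros kcont)
    finally show ?thesis by simp
  qed
  have fbound: "integral {0..2*pi} (f N) \<le> M * (\<Sum>n. c n * J n)" for N
  proof -
    have "(\<Sum>n<N. c n * integral {0..2*pi} (k n)) \<le> (\<Sum>n<N. c n * J n)"
      by (intro sum_mono mult_left_mono kJ cnn)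
    also have "\<dots> \<le> (\<Sum>n. c n * J n)"
      by (rule sum_le_suminf[OF sJ']) (auto intro: mult_nonneg_nonneg cnn Jnn)
    finally show ?thesis using M fI[of N] by (simp add: mult_left_mono)
  qed
  have fnn: "0 \<le> integral {0..2*pi} (f N)" for N
    by (rule integral_nonneg'[where f="f N"]) (auto simp: f_def intro!: mult_nonneg_nonneg sum_nonneg cnn knn M[THEN less_imp_le])
  have bnd: "bounded (range (\<lambda>N. integral {0..2*pi} (f N)))"
    unfolding bounded_real using fbound fnn by (intro exI[of _ "M * (\<Sum>n. c n * J n)"]) auto
  from monotone_convergence_increasing[OF fint fmono flim bnd]
  have gint: "g integrable_on {0..2*pi}"
    and glim: "(\<lambda>N. integral {0..2*pi} (f N)) \<longlonglongrightarrow> integral {0..2*pi} g" by auto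
  have gI: "integral {0..2*pi} g \<le> M * (\<Sum>n. c n * J n)"
    by (rule LIMSEQ_le_const2[OF glim], rule exI[of _ 0]) (use fbound in auto)
  have gnn: "0 \<le> g \<theta>" for \<theta>
    unfolding g_def using M pw_sum[of \<theta>]
    by (intro mult_nonneg_nonneg suminf_nonneg) (auto intro: mult_nonneg_nonneg cnn knn)
  have "integral {0..2*pi} (\<lambda>\<theta>. (norm (resolvent (z \<theta>) (diag G \<Phi> \<Psi>) x))\<^sup>2) \<le> integral {0..2*pi} g"
  proof (cases "(\<lambda>\<theta>. (norm (resolvent (z \<theta>) (diag G \<Phi> \<Psi>) x))\<^sup>2) integrable_on {0..2*pi}")
    case True
    show ?thesis by (rule integral_le[OF True gint]) (use pw in \<open>simp add: g_def\<close>)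
  next
    case False
    thus ?thesis using integral_nonneg'[where S="{0..2*pi}" and f=g] gnn by (simp add: not_integrable_integral)
  qed
  also note gI
  finally show "integral {0..2*pi} (\<lambda>\<theta>. (norm (resolvent (complex_of_real r * exp (\<i> * complex_of_real \<theta>))
              (diag G \<Phi> \<Psi>) x))\<^sup>2)
         \<le> M * (\<Sum>n. (cmod (cinner x (\<Psi> n)))\<^sup>2 *
            (if a n < 1 then 2 * pi / (r\<^sup>2 - (a n)\<^sup>2) else 2 * pi / (a n - r)\<^sup>2))"
    by (simp add: z_def c_def J_def)
qed

lemma limit_generic:
  fixes \<Phi> \<Psi> :: "nat \<Rightarrow> 'a::chilbert" and G :: "nat \<Rightarrow> complex" and a :: "nat \<Rightarrow> real"
    and K :: "real \<Rightarrow> real"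
  assumes R: "rsys \<Phi> \<Psi> m M"
    and B: "\<And>n. cmod (G n) \<le> B"
    and aG: "\<And>n. cmod (G n) = a n"
    and d: "0 < d" "\<And>n. 1 < a n \<Longrightarrow> 1 + 2 * d \<le> a n" "\<And>n. a n \<noteq> 1"
    and K: "(K \<longlongrightarrow> 0) (at_right 1)" "\<And>r. 1 < r \<Longrightarrow> r < 1 + d \<Longrightarrow> 0 \<le> K r"
    and dom: "\<And>r n. 1 < r \<Longrightarrow> r < 1 + d \<Longrightarrow>
        K r * (if a n < 1 then 2 * pi / (r\<^sup>2 - (a n)\<^sup>2) else 2 * pi / (a n - r)\<^sup>2) \<le> D n"
    and Ds: "summable (\<lambda>n. (cmod (cinner x (\<Psi> n)))\<^sup>2 * D n)"
  shows "((\<lambda>r. K r * integral {0..2*pi} (\<lambda>\<theta>. (norm (resolvent (complex_of_real r * exp (\<i> * complex_of_real \<theta>))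
              (diag G \<Phi> \<Psi>) x))\<^sup>2)) \<longlongrightarrow> 0) (at_right 1)"
proof -
  define c where "c n = (cmod (cinner x (\<Psi> n)))\<^sup>2" for n
  define J where "J r n = (if a n < 1 then 2 * pi / (r\<^sup>2 - (a n)\<^sup>2) else 2 * pi / (a n - r)\<^sup>2)" for r n
  define Jb where "Jb n = (if a n < 1 then 2 * pi / (1 - (a n)\<^sup>2) else 2 * pi / d\<^sup>2)" for n
  define Q where "Q r = K r * integral {0..2*pi} (\<lambda>\<theta>. (norm (resolvent (complex_of_real r * exp (\<i> * complex_of_real \<theta>))
              (diag G \<Phi> \<Psi>) x))\<^sup>2)" for r
  have M: "0 < M" by (rule rsysD(2)[OF R])
  have ev: "eventually (\<lambda>r. r \<in> {1<..<1+d}) (at_right (1::real))"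
    by (rule eventually_at_right_real) (use d in simp)
  have a0: "0 \<le> a n" for n using aG[of n] by (metis norm_ge_zero)
  have out: "1 + 2 * d \<le> a n" if "\<not> a n < 1" for n
    using d(2)[of n] d(3)[of n] that by linarith
  have cnn: "0 \<le> c n" for n by (simp add: c_def)
  have Jnn: "0 \<le> J r n" if "1 < r" "r < 1 + d" for r n
    unfolding J_def by (rule J_le_Jb(2)[OF d(1) a0 out that])
  have JJb: "J r n \<le> Jb n" if "1 < r" "r < 1 + d" for r n
    unfolding J_def Jb_def by (rule J_le_Jb(1)[OF d(1) a0 out that])
  have upper: "Q r \<le> M * (\<Sum>n. c n * (K r * J r n))" if "1 < r" "r < 1 + d" for r
  proof -
    note me = main_est[OF R B aG d that, where x=x]
    have s: "summable (\<lambda>n. c n * J r n)" using me(1) by (simp add: c_def J_def)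
    have "Q r \<le> K r * (M * (\<Sum>n. c n * J r n))"
      unfolding Q_def using me(2) K(2)[OF that] by (intro mult_left_mono) (auto simp: c_def J_def)
    also have "\<dots> = M * (\<Sum>n. c n * (K r * J r n))"
    proof -
      have "(\<Sum>n. c n * (K r * J r n)) = (\<Sum>n. K r * (c n * J r n))" by (simp add: algebra_simps)
      also have "\<dots> = K r * (\<Sum>n. c n * J r n)" by (rule suminf_mult[OF s])
      finally show ?thesis by (simp add: algebra_simps)
    qed
    finally show ?thesis .
  qed
  have lower: "0 \<le> Q r" if "1 < r" "r < 1 + d" for r
    unfolding Q_def using K(2)[OF that] by (intro mult_nonneg_nonneg integral_nonneg') auto
  have T: "((\<lambda>r. \<Sum>n. c n * (K r * J r n)) \<longlongrightarrow> 0) (at_right 1)"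
  proof (rule tannery[where b="\<lambda>n. c n * D n"])
    show "summable (\<lambda>n. c n * D n)" using Ds by (simp add: c_def)
    show "\<forall>\<^sub>F r in at_right 1. \<forall>n. 0 \<le> c n * (K r * J r n) \<and> c n * (K r * J r n) \<le> c n * D n"
      using ev
    proof (rule eventually_mono)
      fix r assume "r \<in> {1<..<1+d}"
      hence r: "1 < r" "r < 1 + d" by auto
      have domJ: "K r * J r n \<le> D n" for n unfolding J_def by (rule dom[OF r])
      show "\<forall>n. 0 \<le> c n * (K r * J r n) \<and> c n * (K r * J r n) \<le> c n * D n"
      proof
        fix n
        have "0 \<le> K r * J r n" using K(2)[OF r] Jnn[OF r] by simp
        thus "0 \<le> c n * (K r * J r n) \<and> c n * (K r * J r n) \<le> c n * D n"
          using domJ[of n] cnn[of n] by (auto intro: mult_nonneg_nonneg mult_left_mono)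
      qed
    qed
    fix n
    show "((\<lambda>r. c n * (K r * J r n)) \<longlongrightarrow> 0) (at_right 1)"
    proof (rule tendsto_sandwich[where f="\<lambda>r. 0" and h="\<lambda>r. c n * (K r * Jb n)"])
      show "\<forall>\<^sub>F r in at_right 1. 0 \<le> c n * (K r * J r n)"
        using ev by (rule eventually_mono)
          (use K(2) Jnn cnn in \<open>auto intro!: mult_nonneg_nonneg\<close>)
      show "\<forall>\<^sub>F r in at_right 1. c n * (K r * J r n) \<le> c n * (K r * Jb n)"
        using ev by (rule eventually_mono)
          (use K(2) JJb cnn in \<open>auto intro!: mult_left_mono\<close>)
      show "((\<lambda>r. 0) \<longlongrightarrow> 0) (at_right 1)" by simp
      have "((\<lambda>r. c n * (K r * Jb n)) \<longlongrightarrow> c n * (0 * Jb n)) (at_right 1)"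
        by (intro tendsto_intros K(1))
      thus "((\<lambda>r. c n * (K r * Jb n)) \<longlongrightarrow> 0) (at_right 1)" by simp
    qed
  qed
  have T2: "((\<lambda>r. M * (\<Sum>n. c n * (K r * J r n))) \<longlongrightarrow> 0) (at_right 1)"
    using tendsto_mult_left[OF T, of M] by simp
  have "(Q \<longlongrightarrow> 0) (at_right 1)"
  proof (rule tendsto_sandwich[OF _ _ tendsto_const T2])
    show "\<forall>\<^sub>F r in at_right 1. 0 \<le> Q r" using ev by (rule eventually_mono) (use lower in auto)
    show "\<forall>\<^sub>F r in at_right 1. Q r \<le> M * (\<Sum>n. c n * (K r * J r n))"
      using ev by (rule eventually_mono) (use upper in auto)
  qed
  thus ?thesis unfolding Q_def[abs_def] .
qed

lemma out_neg:
  assumes "0 < \<omega>" "0 < \<Upsilon>" "Re l \<le> - \<omega> \<or> l \<in> Omega \<alpha> \<Upsilon>"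
  shows "Re l < 0"
proof (cases "Re l \<le> - \<omega>")
  case True thus ?thesis using assms by simp
next
  case False
  hence "l \<in> Omega \<alpha> \<Upsilon>" using assms by simp
  hence im: "Im l \<noteq> 0" and re: "Re l \<le> - \<Upsilon> / (\<bar>Im l\<bar> powr \<alpha>)" unfolding Omega_def by auto
  have "0 < \<Upsilon> / (\<bar>Im l\<bar> powr \<alpha>)" using im assms by simp
  thus ?thesis using re by simp
qed

lemma dom_a:
  fixes a d r :: real
  assumes d: "0 < d" "d \<le> 1/2" and a0: "0 \<le> a" and out: "\<not> a < 1 \<Longrightarrow> 1 + 2 * d \<le> a"
    and r: "1 < r" "r < 1 + d"
  shows "(r - 1) * (if a < 1 then 2 * pi / (r\<^sup>2 - a\<^sup>2) else 2 * pi / (a - r)\<^sup>2) \<le> pi + 2 * pi / d\<^sup>2"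
proof (cases "a < 1")
  case True
  have a2: "a\<^sup>2 \<le> 1" using True a0 by (simp add: power_le_one)
  have "r\<^sup>2 - 1 - 2 * (r - 1) = (r - 1)\<^sup>2" by (simp add: power2_eq_square algebra_simps)
  moreover have "0 \<le> (r - 1)\<^sup>2" by simp
  ultimately have "2 * (r - 1) \<le> r\<^sup>2 - 1" by linarith
  hence h: "2 * (r - 1) \<le> r\<^sup>2 - a\<^sup>2" using a2 by simp
  have "(r - 1) * (2 * pi / (r\<^sup>2 - a\<^sup>2)) \<le> (r - 1) * (2 * pi / (2 * (r - 1)))"
    using h r by (intro mult_left_mono divide_left_mono mult_pos_pos) auto
  also have "\<dots> = pi"
  proof -
    have u: "\<And>u::real. u \<noteq> 0 \<Longrightarrow> u * (2 * pi / (2 * u)) = pi" by simp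
    show ?thesis using r by (intro u) simp
  qed
  also have "\<dots> \<le> pi + 2 * pi / d\<^sup>2" by simp
  finally show ?thesis using True by simp
next
  case False
  have "d \<le> a - r" using out[OF False] r by simp
  hence "d\<^sup>2 \<le> (a - r)\<^sup>2" using d by (intro power_mono) auto
  hence h: "2 * pi / (a - r)\<^sup>2 \<le> 2 * pi / d\<^sup>2" using d by (intro divide_left_mono mult_pos_pos) auto
  have "(r - 1) * (2 * pi / (a - r)\<^sup>2) \<le> 1 * (2 * pi / d\<^sup>2)"
    using h r d by (intro mult_mono) auto
  also have "\<dots> \<le> pi + 2 * pi / d\<^sup>2" by simp
  finally show ?thesis using False by simp
qed

lemma dom_b:
  fixes l :: complex and \<omega> \<alpha> \<Upsilon> \<tau> \<delta> r :: real
  assumes pos: "0 < \<omega>" "0 < \<alpha>" "0 < \<Upsilon>" "0 < \<tau>"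
    and \<delta>: "0 < \<delta>" "\<delta> \<le> \<alpha> / 2"
    and out: "Re l \<le> - \<omega> \<or> l \<in> Omega \<alpha> \<Upsilon>"
    and r: "1 < r" "r - 1 < exp (-1)"
  shows "Lambda (\<delta> / \<alpha>) r * (2 * pi / (r\<^sup>2 - (exp (\<tau> * Re l))\<^sup>2))
     \<le> (2 * pi * (1 / ((1 - exp (- \<tau> * \<omega>)) * \<omega> powr (2 * \<delta>)) + 2 * \<tau> powr (2 * \<delta>)
               + 2 / ((\<tau> * \<Upsilon>) powr (2 * (\<delta> / \<alpha>))))) * cmod l powr (2 * \<delta>)"
proof -
  note k = key_ineq[OF pos \<delta> out r]
  define e where "e = exp (\<tau> * Re l)"
  have e: "0 < e" "e < 1" using k(2) by (auto simp: e_def)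
  have L: "0 \<le> Lambda (\<delta> / \<alpha>) r" using Lambda_le1(1)[of "\<delta>/\<alpha>" r] \<delta> pos r
    by (simp add: field_simps)
  have "r - e \<le> r\<^sup>2 - e\<^sup>2"
  proof -
    have "r\<^sup>2 - e\<^sup>2 = (r - e) * (r + e)" by (simp add: power2_eq_square algebra_simps)
    moreover have "(r - e) * 1 \<le> (r - e) * (r + e)" using e r by (intro mult_left_mono) auto
    ultimately show ?thesis by simp
  qed
  hence "2 * pi / (r\<^sup>2 - e\<^sup>2) \<le> 2 * pi / (r - e)" using e r by (intro divide_left_mono mult_pos_pos) auto
  hence "Lambda (\<delta> / \<alpha>) r * (2 * pi / (r\<^sup>2 - e\<^sup>2)) \<le> Lambda (\<delta> / \<alpha>) r * (2 * pi / (r - e))"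
    using L by (intro mult_left_mono) auto
  also have "\<dots> = 2 * pi * (Lambda (\<delta> / \<alpha>) r / (r - e))" by simp
  also have "\<dots> \<le> 2 * pi * ((1 / ((1 - exp (- \<tau> * \<omega>)) * \<omega> powr (2 * \<delta>)) + 2 * \<tau> powr (2 * \<delta>)
               + 2 / ((\<tau> * \<Upsilon>) powr (2 * (\<delta> / \<alpha>)))) * cmod l powr (2 * \<delta>))"
    using k(1) by (intro mult_left_mono) (auto simp: e_def)
  finally show ?thesis by (simp add: e_def mult.assoc)
qed

theorem mainTheorem12:
  fixes lam :: "nat \<Rightarrow> complex" and \<phi> \<psi> :: "nat \<Rightarrow> 'a::chilbert"
    and \<omega> \<alpha> \<Upsilon> \<tau> :: real
  assumes RS: "riesz_spectral lam \<phi> \<psi>"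
    and A1: "\<omega> > 0" "\<alpha> > 0" "\<Upsilon> > 0"
            "finite {n. Re (lam n) > - \<omega> \<and> lam n \<notin> Omega \<alpha> \<Upsilon>}"
    and A2: "\<forall>n. Re (lam n) \<noteq> 0"
    and tau: "\<tau> > 0"
  shows
    "(\<forall>x y. ((\<lambda>r. (r - 1) * integral {0..2*pi}
              (\<lambda>\<theta>. (norm (resolvent (complex_of_real r * exp (\<i> * complex_of_real \<theta>))
                                    (rs_semigroup lam \<phi> \<psi> \<tau>) x))\<^sup>2)) \<longlongrightarrow> 0) (at_right 1) \<and>
            ((\<lambda>r. (r - 1) * integral {0..2*pi}
              (\<lambda>\<theta>. (norm (resolvent (complex_of_real r * exp (\<i> * complex_of_real \<theta>))
                                    (hadjoint (rs_semigroup lam \<phi> \<psi> \<tau>)) y))\<^sup>2)) \<longlongrightarrow> 0) (at_right 1))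
     \<and>
     (\<forall>\<delta>. 0 < \<delta> \<and> \<delta> \<le> \<alpha> / 2 \<longrightarrow>
        (\<forall>x \<in> Dom_pow \<delta> lam \<psi>. ((\<lambda>r. Lambda (\<delta> / \<alpha>) r * integral {0..2*pi}
              (\<lambda>\<theta>. (norm (resolvent (complex_of_real r * exp (\<i> * complex_of_real \<theta>))
                                    (rs_semigroup lam \<phi> \<psi> \<tau>) x))\<^sup>2)) \<longlongrightarrow> 0) (at_right 1)) \<and>
        (\<forall>y \<in> Dom_pow \<delta> lam \<phi>. ((\<lambda>r. Lambda (\<delta> / \<alpha>) r * integral {0..2*pi}
              (\<lambda>\<theta>. (norm (resolvent (complex_of_real r * exp (\<i> * complex_of_real \<theta>))
                                    (hadjoint (rs_semigroup lam \<phi> \<psi> \<tau>)) y))\<^sup>2)) \<longlongrightarrow> 0) (at_right 1)))"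
proof -
  have rb: "riesz_basis \<phi>" and bo: "biorthogonal \<phi> \<psi>"
    using RS unfolding riesz_spectral_def by auto
  obtain m M where R: "rsys \<phi> \<psi> m M" using riesz_rsys[OF rb bo] by blast
  have R': "rsys \<psi> \<phi> (1 / M) (1 / m)" by (rule rsys_dual[OF R])
  define g where "g n = exp (complex_of_real \<tau> * lam n)" for n
  define a where "a n = exp (\<tau> * Re (lam n))" for n
  have ga: "cmod (g n) = a n" for n by (simp add: g_def a_def)
  have gca: "cmod (cnj (g n)) = a n" for n by (simp add: ga)
  define F0 where "F0 = {n. Re (lam n) > - \<omega> \<and> lam n \<notin> Omega \<alpha> \<Upsilon>}"
  have fF0: "finite F0" using A1(4) by (simp add: F0_def)
  have outF0: "Re (lam n) \<le> - \<omega> \<or> lam n \<in> Omega \<alpha> \<Upsilon>" if "n \<notin> F0" for n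
    using that by (auto simp: F0_def)
  have a_out: "a n < 1" if "n \<notin> F0" for n
  proof -
    have "Re (lam n) < 0" by (rule out_neg[OF A1(1) A1(3) outF0[OF that]])
    thus ?thesis using tau by (simp add: a_def mult_pos_neg)
  qed
  have a0: "0 \<le> a n" for n by (simp add: a_def)
  have a1: "a n \<noteq> 1" for n
    using A2 tau by (simp add: a_def)
  define B where "B = 1 + (\<Sum>n\<in>F0. a n)"
  have B: "cmod (g n) \<le> B" for n
  proof (cases "n \<in> F0")
    case True
    have "a n \<le> (\<Sum>n\<in>F0. a n)" by (rule member_le_sum[OF True]) (use a0 fF0 in auto)
    thus ?thesis by (simp add: ga B_def)
  next
    case False
    have "0 \<le> (\<Sum>n\<in>F0. a n)" by (simp add: sum_nonneg a0)
    thus ?thesis using a_out[OF False] by (simp add: ga B_def)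
  qed
  have B': "cmod (cnj (g n)) \<le> B" for n using B[of n] by simp
  obtain d0 where d0: "d0 > 0" "\<forall>n\<in>{n\<in>F0. 1 < a n}. d0 \<le> (a n - 1) / 2"
    using finite_pos_lower[where A="{n\<in>F0. 1 < a n}" and P="\<lambda>n. (a n - 1) / 2"] fF0 by auto
  define d where "d = min d0 (exp (-1) / 2)"
  have dpos: "0 < d" using d0 by (simp add: d_def)
  have dhalf: "d \<le> 1/2"
  proof -
    have "exp (-1::real) \<le> 1" by simp
    moreover have "d \<le> exp (-1) / 2" by (simp add: d_def)
    ultimately show ?thesis by linarith
  qed
  have dexp: "d < exp (-1)" by (simp add: d_def min_less_iff_disj)
  have dbig: "1 + 2 * d \<le> a n" if "1 < a n" for n
  proof -
    have "n \<in> F0" using that a_out[of n] by (cases "n \<in> F0") auto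
    hence "d0 \<le> (a n - 1) / 2" using d0 that by auto
    hence "2 * d0 \<le> a n - 1" by simp
    moreover have "d \<le> d0" by (simp add: d_def)
    ultimately show ?thesis by linarith
  qed
  have out': "1 + 2 * d \<le> a n" if "\<not> a n < 1" for n
    using dbig[of n] a1[of n] that by linarith
  have hT: "rs_semigroup lam \<phi> \<psi> \<tau> = diag g \<phi> \<psi>"
    by (simp add: rs_semigroup_diag g_def[abs_def])
  have hTs: "hadjoint (rs_semigroup lam \<phi> \<psi> \<tau>) = diag (\<lambda>n. cnj (g n)) \<psi> \<phi>"
    unfolding hT by (rule hadjoint_diag[where g=g, OF R R' B])
  have "((\<lambda>r::real. r - 1) \<longlongrightarrow> 1 - 1) (at_right 1)"
    by (intro tendsto_intros)
  hence lim1: "((\<lambda>r::real. r - 1) \<longlongrightarrow> 0) (at_right 1)" by simp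
  have domA: "(r - 1) * (if a n < 1 then 2 * pi / (r\<^sup>2 - (a n)\<^sup>2) else 2 * pi / (a n - r)\<^sup>2)
        \<le> pi + 2 * pi / d\<^sup>2" if "1 < r" "r < 1 + d" for r n
    by (rule dom_a[OF dpos dhalf a0 out' that])
  have pA: "((\<lambda>r. (r - 1) * integral {0..2*pi}
              (\<lambda>\<theta>. (norm (resolvent (complex_of_real r * exp (\<i> * complex_of_real \<theta>))
                                    (rs_semigroup lam \<phi> \<psi> \<tau>) x))\<^sup>2)) \<longlongrightarrow> 0) (at_right 1)" for x
    unfolding hT
  proof (rule limit_generic[where G=g, OF R B ga dpos dbig a1, where K="\<lambda>r. r - 1" and D="\<lambda>n. pi + 2 * pi / d\<^sup>2"])
    show "((\<lambda>r::real. r - 1) \<longlongrightarrow> 0) (at_right 1)" by (rule lim1)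
    show "summable (\<lambda>n. (cmod (cinner x (\<psi> n)))\<^sup>2 * (pi + 2 * pi / d\<^sup>2))"
      by (intro summable_mult2 rsysD(4)[OF R])
  qed (use domA in auto)
  have pAs: "((\<lambda>r. (r - 1) * integral {0..2*pi}
              (\<lambda>\<theta>. (norm (resolvent (complex_of_real r * exp (\<i> * complex_of_real \<theta>))
                                    (hadjoint (rs_semigroup lam \<phi> \<psi> \<tau>)) y))\<^sup>2)) \<longlongrightarrow> 0) (at_right 1)" for y
    unfolding hTs
  proof (rule limit_generic[where G="\<lambda>n. cnj (g n)", OF R' B' gca dpos dbig a1, where K="\<lambda>r. r - 1" and D="\<lambda>n. pi + 2 * pi / d\<^sup>2"])
    show "((\<lambda>r::real. r - 1) \<longlongrightarrow> 0) (at_right 1)" by (rule lim1)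
    show "summable (\<lambda>n. (cmod (cinner y (\<phi> n)))\<^sup>2 * (pi + 2 * pi / d\<^sup>2))"
      by (intro summable_mult2 rsysD(4)[OF R'])
  qed (use domA in auto)
  have pB: "((\<lambda>r. Lambda (\<delta> / \<alpha>) r * integral {0..2*pi}
              (\<lambda>\<theta>. (norm (resolvent (complex_of_real r * exp (\<i> * complex_of_real \<theta>))
                                    (diag G \<Phi> \<Psi>) x))\<^sup>2)) \<longlongrightarrow> 0) (at_right 1)"
    if \<delta>: "0 < \<delta>" "\<delta> \<le> \<alpha> / 2"
      and RR: "rsys \<Phi> \<Psi> mm MM" and BB: "\<And>n. cmod (G n) \<le> B" and GA: "\<And>n. cmod (G n) = a n"
      and xD: "summable (\<lambda>n. cmod (lam n) powr (2 * \<delta>) * (cmod (cinner x (\<Psi> n)))\<^sup>2)"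
    for \<delta> :: real and \<Phi> \<Psi> :: "nat \<Rightarrow> 'a" and G mm MM x
  proof -
    define C where "C = 2 * pi * (1 / ((1 - exp (- \<tau> * \<omega>)) * \<omega> powr (2 * \<delta>)) + 2 * \<tau> powr (2 * \<delta>)
               + 2 / ((\<tau> * \<Upsilon>) powr (2 * (\<delta> / \<alpha>))))"
    define Jb where "Jb n = (if a n < 1 then 2 * pi / (1 - (a n)\<^sup>2) else 2 * pi / d\<^sup>2)" for n
    define D where "D n = C * cmod (lam n) powr (2 * \<delta>) + (if n \<in> F0 then Jb n else 0)" for n
    have s: "0 < \<delta> / \<alpha>" "\<delta> / \<alpha> \<le> 1/2" using \<delta> A1 by (auto simp: field_simps)
    have Cnn: "0 \<le> C"
    proof -
      have "0 < 1 - exp (- \<tau> * \<omega>)" using tau A1 by simp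
      thus ?thesis unfolding C_def by (intro mult_nonneg_nonneg add_nonneg_nonneg) auto
    qed
    show ?thesis
    proof (rule limit_generic[OF RR BB GA dpos dbig a1, where K="Lambda (\<delta> / \<alpha>)" and D=D])
      show "(Lambda (\<delta> / \<alpha>) \<longlongrightarrow> 0) (at_right 1)" by (rule Lambda_tendsto[OF s])
      show "0 \<le> Lambda (\<delta> / \<alpha>) r" if "1 < r" "r < 1 + d" for r
        using Lambda_le1(1)[OF s that(1)] that dexp by simp
      show "Lambda (\<delta> / \<alpha>) r * (if a n < 1 then 2 * pi / (r\<^sup>2 - (a n)\<^sup>2) else 2 * pi / (a n - r)\<^sup>2) \<le> D n"
        if r: "1 < r" "r < 1 + d" for r n
      proof -
        have r1: "r - 1 < exp (-1)" using r dexp by simp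
        have L: "0 \<le> Lambda (\<delta> / \<alpha>) r" "Lambda (\<delta> / \<alpha>) r \<le> 1" using Lambda_le1[OF s r(1) r1] by auto
        note JJ = J_le_Jb[OF dpos a0 out' r, of n]
        show ?thesis
        proof (cases "n \<in> F0")
          case True
          have "Lambda (\<delta> / \<alpha>) r * (if a n < 1 then 2 * pi / (r\<^sup>2 - (a n)\<^sup>2) else 2 * pi / (a n - r)\<^sup>2)
              \<le> 1 * Jb n"
            using L JJ unfolding Jb_def by (intro mult_mono) auto
          also have "\<dots> \<le> D n" using True Cnn by (simp add: D_def)
          finally show ?thesis .
        next
          case False
          have "Lambda (\<delta> / \<alpha>) r * (2 * pi / (r\<^sup>2 - (exp (\<tau> * Re (lam n)))\<^sup>2))
              \<le> C * cmod (lam n) powr (2 * \<delta>)"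
            unfolding C_def by (rule dom_b[OF A1(1,2,3) tau \<delta> outF0[OF False] r(1) r1])
          thus ?thesis using False a_out[OF False] by (simp add: D_def a_def)
        qed
      qed
      show "summable (\<lambda>n. (cmod (cinner x (\<Psi> n)))\<^sup>2 * D n)"
      proof -
        have "summable (\<lambda>n. C * (cmod (lam n) powr (2 * \<delta>) * (cmod (cinner x (\<Psi> n)))\<^sup>2)
                + (if n \<in> F0 then (cmod (cinner x (\<Psi> n)))\<^sup>2 * Jb n else 0))"
          by (intro summable_add summable_mult xD summable_If_finite_set fF0)
        moreover have "(\<lambda>n. C * (cmod (lam n) powr (2 * \<delta>) * (cmod (cinner x (\<Psi> n)))\<^sup>2)
                + (if n \<in> F0 then (cmod (cinner x (\<Psi> n)))\<^sup>2 * Jb n else 0))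
              = (\<lambda>n. (cmod (cinner x (\<Psi> n)))\<^sup>2 * D n)"
          by (auto simp: D_def algebra_simps)
        ultimately show ?thesis by simp
      qed
    qed
  qed
  have pBT: "((\<lambda>r. Lambda (\<delta> / \<alpha>) r * integral {0..2*pi}
              (\<lambda>\<theta>. (norm (resolvent (complex_of_real r * exp (\<i> * complex_of_real \<theta>))
                                    (rs_semigroup lam \<phi> \<psi> \<tau>) x))\<^sup>2)) \<longlongrightarrow> 0) (at_right 1)"
    if "0 < \<delta>" "\<delta> \<le> \<alpha> / 2" "x \<in> Dom_pow \<delta> lam \<psi>" for \<delta> x
    unfolding hT
    by (rule pB[where G=g, OF that(1,2) R B ga]) (use that(3) in \<open>simp add: Dom_pow_def\<close>)
  have pBS: "((\<lambda>r. Lambda (\<delta> / \<alpha>) r * integral {0..2*pi}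
              (\<lambda>\<theta>. (norm (resolvent (complex_of_real r * exp (\<i> * complex_of_real \<theta>))
                                    (hadjoint (rs_semigroup lam \<phi> \<psi> \<tau>)) y))\<^sup>2)) \<longlongrightarrow> 0) (at_right 1)"
    if "0 < \<delta>" "\<delta> \<le> \<alpha> / 2" "y \<in> Dom_pow \<delta> lam \<phi>" for \<delta> y
    unfolding hTs
    by (rule pB[where G="\<lambda>n. cnj (g n)", OF that(1,2) R' B' gca]) (use that(3) in \<open>simp add: Dom_pow_def\<close>)
  show ?thesis using pA pAs pBT pBS by blast
qed

end
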